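(* Let $k\leq n-2$ and $m\geq1$, or let $k=n-1$ and $m\geq2$. If $G$ is minor maximal amongst graphs with $n$ vertices, at most $m$ parallel edges between any given pair of vertices, and spectator floor $k$, then $G$ is an $m$-saturated crowded $(n-k)$-parade.
   Context: All graphs are finite, have at least one vertex, have no loops, and may have multiple (parallel) edges. A minor of $H$ is any graph obtained from $H$ by a sequence of: deleting an isolated vertex, deleting an edge, contracting an edge that has no edge parallel to it. A graph $G$ in a class $\mathcal{C}$ is minor maximal in $\mathcal{C}$ if no graph in $\mathcal{C}$ other than $G$ has $G$ as a minor. A unique shortest path is a shortest $u$–$v$ path $P$ such that every $u$–$v$ path with the same number of vertices is identical to $P$, where two paths with different edge sequences are different even if their vertex sequences agree; a single vertex is a unique shortest path. The parade number $\mathrm{usp}(G)$ is the largest number of vertices of a unique shortest path in $G$; a parade is a unique shortest path with $\mathrm{usp}(G)$ vertices. The spectator number is $\mathrm{sp}(G)=|V(G)|-\mathrm{usp}(G)$. The spectator floor $\lfloor \mathrm{sp}\rfloor(G)$ is the minimum of $\mathrm{sp}(H)$ over all graphs $H$ of which $G$ is a minor. For $p\geq2$, a crowded $p$-parade is a graph $G$ with a parade $P$ of $p$ vertices such that (i) every vertex outside $P$ is adjacent to exactly two vertices of $P$, and those two vertices are adjacent to each other; (ii) any two vertices outside $P$ that are adjacent to a common vertex of $P$ are adjacent to each other. An $m$-saturated crowded $p$-parade ($p\geq 2$) is a crowded $p$-parade in which every edge not in the parade has exactly $m$ parallel copies (including itself). A crowded $1$-parade is a graph whose simplification is complete; an $m$-saturated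 crowded $1$-parade is a graph in which every pair of vertices is joined by exactly $m$ edges. *)

theory Defs
  imports Main
begin

text \<open>Parallel edges
between a and b are the labelled edges (a,b,i) with i < mult a b; the
multiplicity function is symmetric, zero on the diagonal and outside the vertex set.\<close>

record mgraph =
  verts :: "nat set"
  mult :: "nat \<Rightarrow> nat \<Rightarrow> nat"

definition graph :: "mgraph \<Rightarrow> bool" where
  "graph G \<longleftrightarrow> finite (verts G) \<and> verts G \<noteq> {}
     \<and> (\<forall>a b. mult G a b = mult G b a) \<and> (\<forall>a. mult G a a = 0)
     \<and> (\<forall>a b. 0 < mult G a b \<longrightarrow> a \<in> verts G \<and> b \<in> verts G)"

definition adj :: "mgraph \<Rightarrow> nat \<Rightarrow> nat \<Rightarrow> bool" where
  "adj G a b \<longleftrightarrow> 0 < mult G a b"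

definition del_vertex :: "mgraph \<Rightarrow> nat \<Rightarrow> mgraph" where
  "del_vertex G v = G\<lparr>verts := verts G - {v}\<rparr>"

definition del_edge :: "mgraph \<Rightarrow> nat \<Rightarrow> nat \<Rightarrow> mgraph" where
  "del_edge G x y = G\<lparr>mult := (\<lambda>a b. if (a = x \<and> b = y) \<or> (a = y \<and> b = x)
                                     then mult G a b - 1 else mult G a b)\<rparr>"

definition contract :: "mgraph \<Rightarrow> nat \<Rightarrow> nat \<Rightarrow> mgraph" where
  "contract G x y = \<lparr>verts = verts G - {y},
     mult = (\<lambda>a b. if a = y \<or> b = y \<or> a = b then 0
                   else if a = x then mult G x b + mult G y b
                   else if b = x then mult G a x + mult G a y
                   else mult G a b)\<rparr>"

text \<open>minor_step G H: H arises from G by one minor operation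
 (the result must again be a graph, i.e. keep at least one vertex).\<close>
definition minor_step :: "mgraph \<Rightarrow> mgraph \<Rightarrow> bool" where
  "minor_step G H \<longleftrightarrow>
     (\<exists>v \<in> verts G. (\<forall>b. mult G v b = 0) \<and> 2 \<le> card (verts G) \<and> H = del_vertex G v)
   \<or> (\<exists>x y. 0 < mult G x y \<and> H = del_edge G x y)
   \<or> (\<exists>x y. mult G x y = 1 \<and> H = contract G x y)"

definition iso :: "mgraph \<Rightarrow> mgraph \<Rightarrow> bool" where
  "iso G H \<longleftrightarrow> (\<exists>f. bij_betw f (verts G) (verts H)
      \<and> (\<forall>a \<in> verts G. \<forall>b \<in> verts G. mult H (f a) (f b) = mult G a b))"

definition is_minor :: "mgraph \<Rightarrow> mgraph \<Rightarrow> bool" where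
  "is_minor G H \<longleftrightarrow> (\<exists>G'. minor_step\<^sup>*\<^sup>* H G' \<and> iso G' G)"

definition is_path :: "mgraph \<Rightarrow> nat \<Rightarrow> nat \<Rightarrow> nat list \<Rightarrow> nat list \<Rightarrow> bool" where
  "is_path G u v vs es \<longleftrightarrow> vs \<noteq> [] \<and> distinct vs \<and> set vs \<subseteq> verts G
     \<and> hd vs = u \<and> last vs = v \<and> length es = length vs - 1
     \<and> (\<forall>i < length es. es ! i < mult G (vs ! i) (vs ! Suc i))"

definition shortest_path :: "mgraph \<Rightarrow> nat list \<Rightarrow> nat list \<Rightarrow> bool" where
  "shortest_path G vs es \<longleftrightarrow> is_path G (hd vs) (last vs) vs es
     \<and> (\<forall>vs' es'. is_path G (hd vs) (last vs) vs' es' \<longrightarrow> length vs \<le> length vs')"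

definition unique_shortest_path :: "mgraph \<Rightarrow> nat list \<Rightarrow> nat list \<Rightarrow> bool" where
  "unique_shortest_path G vs es \<longleftrightarrow> shortest_path G vs es
     \<and> (\<forall>vs' es'. is_path G (hd vs) (last vs) vs' es' \<and> length vs' = length vs
           \<longrightarrow> vs' = vs \<and> es' = es)"

definition usp :: "mgraph \<Rightarrow> nat" where
  "usp G = Max {length vs | vs es. unique_shortest_path G vs es}"

definition parade :: "mgraph \<Rightarrow> nat list \<Rightarrow> nat list \<Rightarrow> bool" where
  "parade G vs es \<longleftrightarrow> unique_shortest_path G vs es \<and> length vs = usp G"

definition sp :: "mgraph \<Rightarrow> nat" where
  "sp G = card (verts G) - usp G"

definition sp_floor :: "mgraph \<Rightarrow> nat" where
  "sp_floor G = Inf {sp H | H. graph H \<and> is_minor G H}"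

definition minor_maximal :: "(mgraph \<Rightarrow> bool) \<Rightarrow> mgraph \<Rightarrow> bool" where
  "minor_maximal C G \<longleftrightarrow> C G \<and> (\<forall>H. C H \<and> is_minor G H \<longrightarrow> iso H G)"

definition graph_class :: "nat \<Rightarrow> nat \<Rightarrow> nat \<Rightarrow> mgraph \<Rightarrow> bool" where
  "graph_class n m k H \<longleftrightarrow> graph H \<and> card (verts H) = n
     \<and> (\<forall>a b. mult H a b \<le> m) \<and> sp_floor H = k"

definition crowded_parade :: "mgraph \<Rightarrow> nat \<Rightarrow> nat list \<Rightarrow> nat list \<Rightarrow> bool" where
  "crowded_parade G p vs es \<longleftrightarrow> 2 \<le> p \<and> parade G vs es \<and> length vs = p
     \<and> (\<forall>w \<in> verts G - set vs. \<exists>a b. a \<noteq> b \<and> {x \<in> set vs. adj G w x} = {a, b} \<and> adj G a b)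
     \<and> (\<forall>w1 \<in> verts G - set vs. \<forall>w2 \<in> verts G - set vs.
          w1 \<noteq> w2 \<and> (\<exists>x \<in> set vs. adj G w1 x \<and> adj G w2 x) \<longrightarrow> adj G w1 w2)"

definition parade_edge :: "nat list \<Rightarrow> nat list \<Rightarrow> nat \<Rightarrow> nat \<Rightarrow> nat \<Rightarrow> bool" where
  "parade_edge vs es a b i \<longleftrightarrow> (\<exists>j < length es. es ! j = i
       \<and> ((vs ! j = a \<and> vs ! Suc j = b) \<or> (vs ! j = b \<and> vs ! Suc j = a)))"

definition saturated_crowded_parade :: "nat \<Rightarrow> nat \<Rightarrow> mgraph \<Rightarrow> bool" where
  "saturated_crowded_parade m p G \<longleftrightarrow>
     (if p = 1 then (\<forall>a \<in> verts G. \<forall>b \<in> verts G. a \<noteq> b \<longrightarrow> mult G a b = m)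
      else (\<exists>vs es. crowded_parade G p vs es
              \<and> (\<forall>a b i. i < mult G a b \<and> \<not> parade_edge vs es a b i \<longrightarrow> mult G a b = m)))"

end

theory Submission
  imports Defs
begin

definition fit :: "mgraph \<Rightarrow> nat \<Rightarrow> (nat \<Rightarrow> nat) \<Rightarrow> (nat \<Rightarrow> nat) \<Rightarrow> bool" where
  "fit K p q pos \<longleftrightarrow>
     (\<forall>i<p. q i \<in> verts K) \<and> inj_on q {..<p} \<and>
     (\<forall>i<p. \<forall>j<p. 0 < mult K (q i) (q j) \<longrightarrow> i = Suc j \<or> j = Suc i) \<and>
     (\<forall>i<p. \<forall>j<p. mult K (q i) (q j) \<le> 1) \<and>
     (\<forall>w \<in> verts K - q ` {..<p}. \<forall>j<p. 0 < mult K w (q j) \<longrightarrow> j = pos w \<or> j = Suc (pos w)) \<and>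
     (\<forall>w \<in> verts K - q ` {..<p}. \<forall>w' \<in> verts K - q ` {..<p}.
         0 < mult K w w' \<longrightarrow> pos w \<le> Suc (pos w') \<and> pos w' \<le> Suc (pos w)) \<and>
     (\<forall>w \<in> verts K - q ` {..<p}. pos w \<le> p - 1)"

lemma graph_verts: "graph K \<Longrightarrow> 0 < mult K a b \<Longrightarrow> a \<in> verts K \<and> b \<in> verts K"
  unfolding graph_def by blast
lemma graph_sym: "graph K \<Longrightarrow> mult K a b = mult K b a"
  unfolding graph_def by blast
lemma graph_diag[simp]: "graph K \<Longrightarrow> mult K a a = 0"
  unfolding graph_def by blast
lemma graph_fin: "graph K \<Longrightarrow> finite (verts K)"
  unfolding graph_def by blast
lemma graph_out: "graph K \<Longrightarrow> a \<notin> verts K \<or> b \<notin> verts K \<Longrightarrow> mult K a b = 0"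
  unfolding graph_def by (meson neq0_conv)

lemma graph_minor_step:
  assumes "graph K" "minor_step K K'" shows "graph K'"
  using assms(2) unfolding minor_step_def
proof (elim disjE exE conjE bexE)
  fix v assume v: "v \<in> verts K" "\<forall>b. mult K v b = 0" "2 \<le> card (verts K)" "K' = del_vertex K v"
  have "verts K - {v} \<noteq> {}"
  proof
    assume "verts K - {v} = {}"
    then have "verts K \<subseteq> {v}" by blast
    then have "card (verts K) \<le> card {v}" by (intro card_mono) auto
    then have "card (verts K) \<le> 1" by simp
    with v show False by simp
  qed
  with assms(1) v show ?thesis unfolding graph_def del_vertex_def
    by (simp, metis gr_implies_not0)
next
  fix x y assume "0 < mult K x y" "K' = del_edge K x y"
  moreover have "x \<in> verts K" "y \<in> verts K" using assms(1) \<open>0 < mult K x y\<close> by (auto simp: graph_def)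
  ultimately show ?thesis using assms(1) unfolding graph_def del_edge_def by auto
next
  fix x y assume xy: "mult K x y = 1" "K' = contract K x y"
  have "x \<in> verts K" "y \<in> verts K" using graph_verts[OF assms(1), of x y] xy(1) by auto
  moreover have "x \<noteq> y" using assms(1) xy(1) by (auto)
  ultimately have xyv: "x \<in> verts K" "y \<in> verts K" "x \<noteq> y" .
  have "finite (verts K')" using graph_fin[OF assms(1)] xy(2) by (simp add: contract_def)
  moreover have "verts K' \<noteq> {}" using xyv xy(2) by (auto simp add: contract_def)
  moreover have "\<forall>a b. mult K' a b = mult K' b a" using xy(2) graph_sym[OF assms(1)]
    by (auto simp add: contract_def add.commute)
  moreover have "\<forall>a. mult K' a a = 0" using xy(2) by (simp add: contract_def)
  moreover have "\<forall>a b. 0 < mult K' a b \<longrightarrow> a \<in> verts K' \<and> b \<in> verts K'"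
  proof (intro allI impI)
    fix a b assume "0 < mult K' a b"
    then show "a \<in> verts K' \<and> b \<in> verts K'" using xy(2) xyv graph_verts[OF assms(1)]
      by (simp add: contract_def split: if_splits) (metis add_gr_0)+
  qed
  ultimately show ?thesis unfolding graph_def by blast
qed

lemma fitD:
  assumes "fit K p q pos"
  shows "\<And>i. i<p \<Longrightarrow> q i \<in> verts K" "inj_on q {..<p}"
    "\<And>i j. i<p \<Longrightarrow> j<p \<Longrightarrow> 0 < mult K (q i) (q j) \<Longrightarrow> i = Suc j \<or> j = Suc i"
    "\<And>i j. i<p \<Longrightarrow> j<p \<Longrightarrow> mult K (q i) (q j) \<le> 1"
    "\<And>w j. w \<in> verts K - q ` {..<p} \<Longrightarrow> j<p \<Longrightarrow> 0 < mult K w (q j) \<Longrightarrow> j = pos w \<or> j = Suc (pos w)"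
    "\<And>w w'. w \<in> verts K - q ` {..<p} \<Longrightarrow> w' \<in> verts K - q ` {..<p} \<Longrightarrow>
         0 < mult K w w' \<Longrightarrow> pos w \<le> Suc (pos w') \<and> pos w' \<le> Suc (pos w)"
    "\<And>w. w \<in> verts K - q ` {..<p} \<Longrightarrow> pos w \<le> p - 1"
  using assms unfolding fit_def by blast+

lemma fitI:
  assumes "\<And>i. i<p \<Longrightarrow> q i \<in> verts K" "inj_on q {..<p}"
    "\<And>i j. i<p \<Longrightarrow> j<p \<Longrightarrow> 0 < mult K (q i) (q j) \<Longrightarrow> i = Suc j \<or> j = Suc i"
    "\<And>i j. i<p \<Longrightarrow> j<p \<Longrightarrow> mult K (q i) (q j) \<le> 1"
    "\<And>w j. w \<in> verts K - q ` {..<p} \<Longrightarrow> j<p \<Longrightarrow> 0 < mult K w (q j) \<Longrightarrow> j = pos w \<or> j = Suc (pos w)"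
    "\<And>w w'. w \<in> verts K - q ` {..<p} \<Longrightarrow> w' \<in> verts K - q ` {..<p} \<Longrightarrow>
         0 < mult K w w' \<Longrightarrow> pos w \<le> Suc (pos w') \<and> pos w' \<le> Suc (pos w)"
    "\<And>w. w \<in> verts K - q ` {..<p} \<Longrightarrow> pos w \<le> p - 1"
  shows "fit K p q pos"
  using assms unfolding fit_def by blast

lemma fit_sub:
  assumes "fit K p q pos" "verts K' \<subseteq> verts K" "\<And>i. i<p \<Longrightarrow> q i \<in> verts K'"
    "\<And>a b. mult K' a b \<le> mult K a b"
  shows "fit K' p q pos"
proof (rule fitI)
  note f = fitD[OF assms(1)]
  have le: "0 < mult K' a b \<Longrightarrow> 0 < mult K a b" for a b using assms(4)[of a b] by linarith
  show "\<And>i. i<p \<Longrightarrow> q i \<in> verts K'" by fact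
  show "inj_on q {..<p}" by (fact f(2))
  show "\<And>i j. i<p \<Longrightarrow> j<p \<Longrightarrow> 0 < mult K' (q i) (q j) \<Longrightarrow> i = Suc j \<or> j = Suc i"
    using f(3) le by blast
  show "\<And>i j. i<p \<Longrightarrow> j<p \<Longrightarrow> mult K' (q i) (q j) \<le> 1"
    using f(4) assms(4) le_trans by blast
  show "\<And>w j. w \<in> verts K' - q ` {..<p} \<Longrightarrow> j<p \<Longrightarrow> 0 < mult K' w (q j) \<Longrightarrow> j = pos w \<or> j = Suc (pos w)"
    using f(5) le assms(2) by blast
  show "\<And>w w'. w \<in> verts K' - q ` {..<p} \<Longrightarrow> w' \<in> verts K' - q ` {..<p} \<Longrightarrow>
         0 < mult K' w w' \<Longrightarrow> pos w \<le> Suc (pos w') \<and> pos w' \<le> Suc (pos w)"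
    using f(6) le assms(2) by blast
  show "\<And>w. w \<in> verts K' - q ` {..<p} \<Longrightarrow> pos w \<le> p - 1"
    using f(7) assms(2) by blast
qed

definition demq :: "(nat \<Rightarrow> nat) \<Rightarrow> nat \<Rightarrow> nat \<Rightarrow> nat" where
  "demq q j i = (if i < j then q i else q (Suc i))"
definition dempos :: "(nat \<Rightarrow> nat) \<Rightarrow> (nat \<Rightarrow> nat) \<Rightarrow> nat \<Rightarrow> nat \<Rightarrow> nat" where
  "dempos q pos j w = (if w = q j then j - 1 else if pos w < j then pos w else pos w - 1)"

lemma demq_img:
  assumes "j < p"
  shows "demq q j ` {..<p-1} = q ` ({..<p} - {j})"
proof
  show "demq q j ` {..<p-1} \<subseteq> q ` ({..<p} - {j})"
    unfolding demq_def using assms by (auto simp: image_iff)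
  show "q ` ({..<p} - {j}) \<subseteq> demq q j ` {..<p-1}"
  proof
    fix x assume "x \<in> q ` ({..<p} - {j})"
    then obtain i where i: "i < p" "i \<noteq> j" "x = q i" by auto
    show "x \<in> demq q j ` {..<p-1}"
    proof (cases "i < j")
      case True then show ?thesis using i assms by (auto simp: demq_def image_iff intro!: bexI[of _ i])
    next
      case False then show ?thesis using i assms by (auto simp: demq_def image_iff intro!: bexI[of _ "i - 1"])
    qed
  qed
qed

lemma fit_demote:
  assumes g: "graph K" and F: "fit K p q pos" and j: "j < p"
  shows "fit K (p-1) (demq q j) (dempos q pos j)"
proof -
  note f = fitD[OF F]
  define idx where "idx i = (if i < j then i else Suc i)" for i
  have dq: "demq q j i = q (idx i)" for i by (simp add: demq_def idx_def)
  have idxlt: "i < p - 1 \<Longrightarrow> idx i < p" for i by (simp add: idx_def; linarith)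
  have idxne: "idx i \<noteq> j" for i by (simp add: idx_def)
  have img: "demq q j ` {..<p-1} = q ` ({..<p} - {j})" by (rule demq_img[OF j])
  have qj_notS: "q i \<noteq> q j" if "i < p" "i \<noteq> j" for i
    using f(2) that j by (meson inj_on_contraD lessThan_iff)
  have S': "verts K - demq q j ` {..<p-1} = (verts K - q ` {..<p}) \<union> {q j}"
    unfolding img using f(1) j f(2) by (auto simp: inj_on_def)
  have dpS: "dempos q pos j w = (if pos w < j then pos w else pos w - 1)" if "w \<in> verts K - q ` {..<p}" for w
    using that j unfolding dempos_def by auto
  show ?thesis
  proof (rule fitI)
    show "\<And>i. i < p - 1 \<Longrightarrow> demq q j i \<in> verts K" using f(1) idxlt dq by simp
    show "inj_on (demq q j) {..<p - 1}"
    proof (rule inj_onI)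
      fix a b assume "a \<in> {..<p-1}" "b \<in> {..<p-1}" "demq q j a = demq q j b"
      then have "idx a = idx b" using f(2) idxlt dq by (simp add: inj_on_def)
      then show "a = b" by (simp add: idx_def split: if_splits)
    qed
    show "\<And>a b. a < p-1 \<Longrightarrow> b < p-1 \<Longrightarrow> 0 < mult K (demq q j a) (demq q j b) \<Longrightarrow> a = Suc b \<or> b = Suc a"
    proof -
      fix a b assume ab: "a < p-1" "b < p-1" "0 < mult K (demq q j a) (demq q j b)"
      then have "idx a = Suc (idx b) \<or> idx b = Suc (idx a)" using f(3) idxlt dq by simp
      moreover have "a \<noteq> b" using ab(3) g dq by auto
      ultimately show "a = Suc b \<or> b = Suc a" by (simp add: idx_def split: if_splits)
    qed
    show "\<And>a b. a < p-1 \<Longrightarrow> b < p-1 \<Longrightarrow> mult K (demq q j a) (demq q j b) \<le> 1"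
      using f(4) idxlt dq by simp
    show "\<And>w i. w \<in> verts K - demq q j ` {..<p - 1} \<Longrightarrow> i < p - 1 \<Longrightarrow> 0 < mult K w (demq q j i) \<Longrightarrow>
          i = dempos q pos j w \<or> i = Suc (dempos q pos j w)"
    proof -
      fix w i assume w: "w \<in> verts K - demq q j ` {..<p - 1}" and i: "i < p - 1" and m: "0 < mult K w (demq q j i)"
      show "i = dempos q pos j w \<or> i = Suc (dempos q pos j w)"
      proof (cases "w = q j")
        case True
        then have "0 < mult K (q j) (q (idx i))" using m dq by simp
        then have "j = Suc (idx i) \<or> idx i = Suc j" using f(3) idxlt[OF i] j by blast
        then show ?thesis using True by (simp add: dempos_def idx_def split: if_splits; arith)
      next
        case False
        then have wS: "w \<in> verts K - q ` {..<p}" using w S' by blast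
        have "idx i = pos w \<or> idx i = Suc (pos w)" using f(5)[OF wS idxlt[OF i]] m dq by simp
        then show ?thesis unfolding dpS[OF wS] idx_def by (simp split: if_splits; arith)
      qed
    qed
    show "\<And>w w'. w \<in> verts K - demq q j ` {..<p - 1} \<Longrightarrow> w' \<in> verts K - demq q j ` {..<p - 1} \<Longrightarrow>
          0 < mult K w w' \<Longrightarrow> dempos q pos j w \<le> Suc (dempos q pos j w') \<and> dempos q pos j w' \<le> Suc (dempos q pos j w)"
    proof -
      have one: "dempos q pos j w' = j - 1" if "w' \<in> verts K - q ` {..<p}" "0 < mult K w' (q j)" for w'
      proof -
        have "j = pos w' \<or> j = Suc (pos w')" using f(5)[OF that(1) j] that(2) by simp
        then show ?thesis unfolding dpS[OF that(1)] by auto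
      qed
      fix w w' assume w: "w \<in> verts K - demq q j ` {..<p - 1}" and w': "w' \<in> verts K - demq q j ` {..<p - 1}"
        and m: "0 < mult K w w'"
      show "dempos q pos j w \<le> Suc (dempos q pos j w') \<and> dempos q pos j w' \<le> Suc (dempos q pos j w)"
      proof (cases "w = q j")
        case True
        show ?thesis
        proof (cases "w' = q j")
          case True then show ?thesis using \<open>w = q j\<close> by simp
        next
          case False
          then have w'S: "w' \<in> verts K - q ` {..<p}" using w' S' by blast
          have "0 < mult K w' (q j)" using m True graph_sym[OF g] by metis
          then show ?thesis using one[OF w'S] True by (simp add: dempos_def)
        qed
      next
        case False
        then have wS: "w \<in> verts K - q ` {..<p}" using w S' by blast
        show ?thesis
        proof (cases "w' = q j")
          case True
          have "0 < mult K w (q j)" using m True by simp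
          then show ?thesis using one[OF wS] True by (simp add: dempos_def)
        next
          case False
          then have w'S: "w' \<in> verts K - q ` {..<p}" using w' S' by blast
          have "pos w \<le> Suc (pos w') \<and> pos w' \<le> Suc (pos w)" using f(6)[OF wS w'S m] .
          then show ?thesis unfolding dpS[OF wS] dpS[OF w'S] by auto
        qed
      qed
    qed
    show "\<And>w. w \<in> verts K - demq q j ` {..<p - 1} \<Longrightarrow> dempos q pos j w \<le> p - 1 - 1"
    proof -
      fix w assume w: "w \<in> verts K - demq q j ` {..<p - 1}"
      show "dempos q pos j w \<le> p - 1 - 1"
      proof (cases "w = q j")
        case True then show ?thesis using j by (simp add: dempos_def)
      next
        case False
        then have wS: "w \<in> verts K - q ` {..<p}" using w S' by blast
        show ?thesis using f(7)[OF wS] j unfolding dpS[OF wS] by auto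
      qed
    qed
  qed
qed

lemma contract_verts[simp]: "verts (contract K x y) = verts K - {y}"
  by (simp add: contract_def)

lemma contract_mult_other:
  "a \<noteq> x \<Longrightarrow> a \<noteq> y \<Longrightarrow> b \<noteq> x \<Longrightarrow> b \<noteq> y \<Longrightarrow> a \<noteq> b \<Longrightarrow> mult (contract K x y) a b = mult K a b"
  by (simp add: contract_def)

lemma contract_mult_x1:
  "x \<noteq> y \<Longrightarrow> b \<noteq> x \<Longrightarrow> b \<noteq> y \<Longrightarrow> mult (contract K x y) x b = mult K x b + mult K y b"
  by (simp add: contract_def)

lemma contract_mult_x2:
  "x \<noteq> y \<Longrightarrow> a \<noteq> x \<Longrightarrow> a \<noteq> y \<Longrightarrow> mult (contract K x y) a x = mult K a x + mult K a y"
  by (simp add: contract_def)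

lemma contract_mult_xx: "mult (contract K x y) x x = 0"
  by (simp add: contract_def)

lemma cmo: "graph K \<Longrightarrow> a \<noteq> x \<Longrightarrow> a \<noteq> y \<Longrightarrow> b \<noteq> x \<Longrightarrow> b \<noteq> y \<Longrightarrow> mult (contract K x y) a b = mult K a b"
  by (cases "a = b") (simp_all add: contract_def)

lemma fit_contract_spec:
  assumes g: "graph K" and F: "fit K p q pos" and x: "x \<in> verts K - q ` {..<p}"
    and y: "y \<in> verts K - q ` {..<p}" and xy: "x \<noteq> y" and pe: "pos x = pos y"
  shows "fit (contract K x y) p q pos"
proof -
  note f = fitD[OF F]
  let ?K = "contract K x y"
  have qx: "q i \<noteq> x" "q i \<noteq> y" if "i < p" for i using x y that by auto
  have S: "verts ?K - q ` {..<p} = (verts K - q ` {..<p}) - {y}" by auto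
  show ?thesis
  proof (rule fitI)
    show "\<And>i. i<p \<Longrightarrow> q i \<in> verts ?K" using f(1) qx by simp
    show "inj_on q {..<p}" by (fact f(2))
    show "\<And>i j. i<p \<Longrightarrow> j<p \<Longrightarrow> 0 < mult ?K (q i) (q j) \<Longrightarrow> i = Suc j \<or> j = Suc i"
      using f(3) qx cmo[OF g] by metis
    show "\<And>i j. i<p \<Longrightarrow> j<p \<Longrightarrow> mult ?K (q i) (q j) \<le> 1"
      using f(4) qx cmo[OF g] by metis
    show "\<And>w j. w \<in> verts ?K - q ` {..<p} \<Longrightarrow> j<p \<Longrightarrow> 0 < mult ?K w (q j) \<Longrightarrow> j = pos w \<or> j = Suc (pos w)"
    proof -
      fix w j assume w: "w \<in> verts ?K - q ` {..<p}" and j: "j < p" and m: "0 < mult ?K w (q j)"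
      show "j = pos w \<or> j = Suc (pos w)"
      proof (cases "w = x")
        case True
        then have "0 < mult K x (q j) + mult K y (q j)" using m contract_mult_x1[OF xy] qx[OF j] by metis
        then have "0 < mult K x (q j) \<or> 0 < mult K y (q j)" by simp
        then show ?thesis using f(5)[OF x j] f(5)[OF y j] pe True by auto
      next
        case False
        have "w \<noteq> y" using w by auto
        then have "0 < mult K w (q j)" using m cmo[OF g] qx[OF j] False by metis
        then show ?thesis using f(5)[of w j] w j by auto
      qed
    qed
    show "\<And>w w'. w \<in> verts ?K - q ` {..<p} \<Longrightarrow> w' \<in> verts ?K - q ` {..<p} \<Longrightarrow>
         0 < mult ?K w w' \<Longrightarrow> pos w \<le> Suc (pos w') \<and> pos w' \<le> Suc (pos w)"
    proof -
      fix w w' assume w: "w \<in> verts ?K - q ` {..<p}" and w': "w' \<in> verts ?K - q ` {..<p}" and m: "0 < mult ?K w w'"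
      have wy: "w \<noteq> y" "w' \<noteq> y" using w w' by auto
      have wne: "w \<noteq> w'" using m by (auto simp: contract_def)
      show "pos w \<le> Suc (pos w') \<and> pos w' \<le> Suc (pos w)"
      proof (cases "w = x")
        case True
        then have "0 < mult K x w' + mult K y w'" using m contract_mult_x1[OF xy] wy wne by metis
        then have "0 < mult K x w' \<or> 0 < mult K y w'" by simp
        then show ?thesis using f(6)[OF x, of w'] f(6)[OF y, of w'] pe True w' by auto
      next
        case False
        show ?thesis
        proof (cases "w' = x")
          case True
          then have "0 < mult K w x + mult K w y" using m contract_mult_x2[OF xy] wy wne by metis
          then have "0 < mult K w x \<or> 0 < mult K w y" by simp
          then show ?thesis using f(6)[OF _ x, of w] f(6)[OF _ y, of w] pe True w by auto
        next
          case False
          then have "0 < mult K w w'" using m contract_mult_other wy wne \<open>w \<noteq> x\<close> by metis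
          then show ?thesis using f(6)[of w w'] w w' by auto
        qed
      qed
    qed
    show "\<And>w. w \<in> verts ?K - q ` {..<p} \<Longrightarrow> pos w \<le> p - 1" using f(7) by auto
  qed
qed

lemma fit_contract_QQ:
  assumes g: "graph K" and F: "fit K p q pos" and i: "i < p" and j: "j < p"
    and m1: "mult K (q i) (q j) = 1"
  shows "fit (contract K (q i) (q j)) (p-1) (demq q j) (dempos q pos j)"
proof -
  note f = fitD[OF F]
  note D = fitD[OF fit_demote[OF g F j]]
  define x where "x = q i"
  define y where "y = q j"
  let ?K = "contract K x y"
  have adj: "i = Suc j \<or> j = Suc i" using f(3)[OF i j] m1 by simp
  then have ij: "i \<noteq> j" by auto
  have xy: "x \<noteq> y" using f(2) i j ij unfolding x_def y_def by (meson inj_on_contraD lessThan_iff)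
  define idx where "idx a = (if a < j then a else Suc a)" for a
  have dq: "demq q j a = q (idx a)" for a by (simp add: demq_def idx_def)
  have idxlt: "a < p - 1 \<Longrightarrow> idx a < p" for a by (simp add: idx_def; linarith)
  have idxne: "idx a \<noteq> j" for a by (simp add: idx_def)
  have qinj: "a < p \<Longrightarrow> b < p \<Longrightarrow> q a = q b \<Longrightarrow> a = b" for a b using f(2) by (simp add: inj_on_def)
  have ny: "demq q j a \<noteq> y" if "a < p - 1" for a
    using qinj[OF idxlt[OF that] j] idxne dq unfolding y_def by metis
  have isx: "demq q j a = x \<longleftrightarrow> idx a = i" if "a < p - 1" for a
    using qinj[OF idxlt[OF that] i] dq unfolding x_def by metis
  have img: "demq q j ` {..<p-1} = q ` ({..<p} - {j})" by (rule demq_img[OF j])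
  have S: "verts ?K - demq q j ` {..<p-1} = verts K - q ` {..<p}"
    unfolding img contract_verts y_def using f(1) j by auto
  have SD: "verts K - demq q j ` {..<p-1} = verts K - q ` {..<p} \<union> {q j}"
    unfolding img using f(1) j f(2) by (auto simp: inj_on_def)
  have dpS: "dempos q pos j w = (if pos w < j then pos w else pos w - 1)" if "w \<in> verts K - q ` {..<p}" for w
    using that j unfolding dempos_def by auto
  have Kx: "mult ?K x b = mult K x b + mult K y b" if "b \<noteq> x" "b \<noteq> y" for b
    using contract_mult_x1[OF xy that] .
  have Kx2: "mult ?K a x = mult K a x + mult K a y" if "a \<noteq> x" "a \<noteq> y" for a
    using contract_mult_x2[OF xy that] .
  have Ko: "mult ?K a b = mult K a b" if "a \<noteq> x" "a \<noteq> y" "b \<noteq> x" "b \<noteq> y" for a b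
    using cmo[OF g that] .
  have main: "(a = Suc b \<or> b = Suc a) \<and> mult ?K x (demq q j b) \<le> 1"
    if a: "a < p - 1" "demq q j a = x" and b: "b < p - 1" "demq q j b \<noteq> x"
      and pm: "0 < mult ?K x (demq q j b)" for a b
  proof -
    have ia: "idx a = i" using isx[OF a(1)] a(2) by simp
    have ib: "idx b \<noteq> i" using isx[OF b(1)] b(2) by simp
    have e: "mult ?K x (demq q j b) = mult K (q i) (q (idx b)) + mult K (q j) (q (idx b))"
      using Kx[OF b(2) ny[OF b(1)]] dq unfolding x_def y_def by simp
    have c1: "0 < mult K (q i) (q (idx b)) \<Longrightarrow> i = Suc (idx b) \<or> idx b = Suc i" using f(3)[OF i idxlt[OF b(1)]] by simp
    have c2: "0 < mult K (q j) (q (idx b)) \<Longrightarrow> j = Suc (idx b) \<or> idx b = Suc j" using f(3)[OF j idxlt[OF b(1)]] by simp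
    have n2: "\<not> (0 < mult K (q i) (q (idx b)) \<and> 0 < mult K (q j) (q (idx b)))"
    proof
      assume "0 < mult K (q i) (q (idx b)) \<and> 0 < mult K (q j) (q (idx b))"
      then have "(i = Suc (idx b) \<or> idx b = Suc i) \<and> (j = Suc (idx b) \<or> idx b = Suc j)" using c1 c2 by blast
      then show False using adj by arith
    qed
    have "mult K (q i) (q (idx b)) \<le> 1" "mult K (q j) (q (idx b)) \<le> 1"
      using f(4) i j idxlt[OF b(1)] by auto
    then have le: "mult ?K x (demq q j b) \<le> 1" using e n2 by auto
    have "0 < mult K (q i) (q (idx b)) \<or> 0 < mult K (q j) (q (idx b))" using pm e by simp
    then have "(i = Suc (idx b) \<or> idx b = Suc i) \<or> (j = Suc (idx b) \<or> idx b = Suc j)" using c1 c2 by blast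
    then have "a = Suc b \<or> b = Suc a" using ia ib idxne[of b] adj unfolding idx_def by (simp split: if_splits; arith)
    with le show ?thesis by simp
  qed
  show ?thesis unfolding x_def[symmetric] y_def[symmetric]
  proof (rule fitI)
    show "\<And>a. a < p - 1 \<Longrightarrow> demq q j a \<in> verts ?K" using D(1) ny by simp
    show "inj_on (demq q j) {..<p - 1}" by (fact D(2))
    show "\<And>a b. a < p-1 \<Longrightarrow> b < p-1 \<Longrightarrow> 0 < mult ?K (demq q j a) (demq q j b) \<Longrightarrow> a = Suc b \<or> b = Suc a"
    proof -
      fix a b assume a: "a < p-1" and b: "b < p-1" and m: "0 < mult ?K (demq q j a) (demq q j b)"
      show "a = Suc b \<or> b = Suc a"
      proof (cases "demq q j a = x")
        case True
        have "demq q j b \<noteq> x" using True m by (auto simp: contract_mult_xx)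
        then show ?thesis using main[OF a True b] m True by simp
      next
        case False
        show ?thesis
        proof (cases "demq q j b = x")
          case True
          have "0 < mult ?K x (demq q j a)" using m True Kx Kx2 False ny[OF a] by (simp add: add.commute graph_sym[OF g])
          then show ?thesis using main[OF b True a False] by auto
        next
          case False2: False
          then show ?thesis using D(3)[OF a b] m Ko[OF False ny[OF a] False2 ny[OF b]] by simp
        qed
      qed
    qed
    show "\<And>a b. a < p-1 \<Longrightarrow> b < p-1 \<Longrightarrow> mult ?K (demq q j a) (demq q j b) \<le> 1"
    proof -
      fix a b assume a: "a < p-1" and b: "b < p-1"
      show "mult ?K (demq q j a) (demq q j b) \<le> 1"
      proof (cases "mult ?K (demq q j a) (demq q j b) = 0")
        case True then show ?thesis by simp
      next
        case nz: False
        then have m: "0 < mult ?K (demq q j a) (demq q j b)" by simp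
        show ?thesis
        proof (cases "demq q j a = x")
          case True
          have "demq q j b \<noteq> x" using True m by (auto simp: contract_mult_xx)
          then show ?thesis using main[OF a True b] m True by simp
        next
          case False
          show ?thesis
          proof (cases "demq q j b = x")
            case True
            have e: "mult ?K (demq q j a) x = mult ?K x (demq q j a)" using True Kx Kx2 False ny[OF a] by (simp add: add.commute graph_sym[OF g])
            then have "0 < mult ?K x (demq q j a)" using m True by simp
            then show ?thesis using main[OF b True a False] e True by auto
          next
            case False2: False
            then show ?thesis using D(4)[OF a b] Ko[OF False ny[OF a] False2 ny[OF b]] by simp
          qed
        qed
      qed
    qed
    show "\<And>w b. w \<in> verts ?K - demq q j ` {..<p - 1} \<Longrightarrow> b < p - 1 \<Longrightarrow> 0 < mult ?K w (demq q j b) \<Longrightarrow>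
          b = dempos q pos j w \<or> b = Suc (dempos q pos j w)"
    proof -
      fix w b assume w: "w \<in> verts ?K - demq q j ` {..<p - 1}" and b: "b < p - 1" and m: "0 < mult ?K w (demq q j b)"
      have wS: "w \<in> verts K - q ` {..<p}" using w S by blast
      have wx: "w \<noteq> x" "w \<noteq> y" using wS i j unfolding x_def y_def by auto
      show "b = dempos q pos j w \<or> b = Suc (dempos q pos j w)"
      proof (cases "demq q j b = x")
        case True
        then have ib: "idx b = i" using isx[OF b] by simp
        have "0 < mult K w (q i) + mult K w (q j)" using m True Kx2[OF wx] unfolding x_def y_def by simp
        then have "0 < mult K w (q i) \<or> 0 < mult K w (q j)" by simp
        then have "(i = pos w \<or> i = Suc (pos w)) \<or> (j = pos w \<or> j = Suc (pos w))"
          using f(5)[OF wS i] f(5)[OF wS j] by blast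
        then show ?thesis unfolding dpS[OF wS] using ib adj unfolding idx_def by (simp split: if_splits; arith)
      next
        case False
        have wD: "w \<in> verts K - demq q j ` {..<p - 1}" using wS SD by simp
        show ?thesis using D(5)[OF wD b] m Ko[OF wx False ny[OF b]] by simp
      qed
    qed
    show "\<And>w w'. w \<in> verts ?K - demq q j ` {..<p - 1} \<Longrightarrow> w' \<in> verts ?K - demq q j ` {..<p - 1} \<Longrightarrow>
          0 < mult ?K w w' \<Longrightarrow> dempos q pos j w \<le> Suc (dempos q pos j w') \<and> dempos q pos j w' \<le> Suc (dempos q pos j w)"
    proof -
      fix w w' assume w: "w \<in> verts ?K - demq q j ` {..<p - 1}" and w': "w' \<in> verts ?K - demq q j ` {..<p - 1}"
        and m: "0 < mult ?K w w'"
      have wS: "w \<in> verts K - q ` {..<p}" "w' \<in> verts K - q ` {..<p}" using w w' S by blast+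
      have wx: "w \<noteq> x" "w \<noteq> y" "w' \<noteq> x" "w' \<noteq> y" using wS i j unfolding x_def y_def by auto
      have wD: "w \<in> verts K - demq q j ` {..<p - 1}" "w' \<in> verts K - demq q j ` {..<p - 1}" using wS SD by auto
      show "dempos q pos j w \<le> Suc (dempos q pos j w') \<and> dempos q pos j w' \<le> Suc (dempos q pos j w)"
        using D(6)[OF wD] m Ko[OF wx] by simp
    qed
    show "\<And>w. w \<in> verts ?K - demq q j ` {..<p - 1} \<Longrightarrow> dempos q pos j w \<le> p - 1 - 1"
      using D(7) S SD by auto
  qed
qed

lemma demote_S:
  assumes F: "fit K p q pos" and j: "j < p"
  shows "verts K - demq q j ` {..<p-1} = (verts K - q ` {..<p}) \<union> {q j}"
  unfolding demq_img[OF j] using fitD(1,2)[OF F] j by (auto simp: inj_on_def)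

lemma dempos_S: "w \<in> verts K - q ` {..<p} \<Longrightarrow> j < p \<Longrightarrow> dempos q pos j w = (if pos w < j then pos w else pos w - 1)"
  unfolding dempos_def by auto

lemma demote_spec:
  assumes g: "graph K" and F: "fit K p q pos" and j: "j < p"
    and x: "x \<in> (verts K - q ` {..<p}) \<union> {q j}" and y: "y \<in> (verts K - q ` {..<p}) \<union> {q j}"
    and xy: "x \<noteq> y" and pe: "dempos q pos j x = dempos q pos j y"
  shows "fit (contract K x y) (p-1) (demq q j) (dempos q pos j)"
proof -
  have "x \<in> verts K - demq q j ` {..<p-1}" "y \<in> verts K - demq q j ` {..<p-1}"
    using x y demote_S[OF F j] by blast+
  then show ?thesis using fit_contract_spec[OF g fit_demote[OF g F j], of x y] xy pe by blast
qed

lemma fit_step: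
  assumes g: "graph K" and st: "minor_step K K'" and F: "fit K p q pos" and c: "card (verts K) \<le> p + k"
  shows "\<exists>p' q' pos'. fit K' p' q' pos' \<and> card (verts K') \<le> p' + k"
  using st unfolding minor_step_def
proof (elim disjE exE conjE bexE)
  note f = fitD[OF F]
  fix v assume v: "v \<in> verts K" "\<forall>b. mult K v b = 0" "2 \<le> card (verts K)" "K' = del_vertex K v"
  have vK: "verts K' = verts K - {v}" "mult K' = mult K" using v(4) by (auto simp: del_vertex_def)
  have cK: "card (verts K') = card (verts K) - 1" using vK v(1) graph_fin[OF g] by simp
  show ?thesis
  proof (cases "v \<in> q ` {..<p}")
    case True
    then obtain j where j: "j < p" "v = q j" by auto
    have "fit K' (p-1) (demq q j) (dempos q pos j)"
    proof (rule fit_sub[OF fit_demote[OF g F j(1)]])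
      show "verts K' \<subseteq> verts K" using vK by auto
      show "\<And>a b. mult K' a b \<le> mult K a b" using vK by simp
      fix i assume i: "i < p - 1"
      have "demq q j i \<in> demq q j ` {..<p-1}" using i by auto
      then have "demq q j i \<in> q ` ({..<p} - {j})" using demq_img[OF j(1)] by simp
      then have "demq q j i \<noteq> q j" "demq q j i \<in> verts K" using f(1,2) j(1) by (auto simp: inj_on_def)
      then show "demq q j i \<in> verts K'" using vK j by simp
    qed
    moreover have "card (verts K') \<le> p - 1 + k" using cK c j by linarith
    ultimately show ?thesis by blast
  next
    case False
    have "fit K' p q pos"
      by (rule fit_sub[OF F]) (use vK False f(1) in auto)
    moreover have "card (verts K') \<le> p + k" using cK c by linarith
    ultimately show ?thesis by blast
  qed
next
  fix x y assume "0 < mult K x y" "K' = del_edge K x y"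
  then have "fit K' p q pos" by (intro fit_sub[OF F]) (auto simp: del_edge_def fitD(1)[OF F])
  moreover have "card (verts K') \<le> p + k" using c \<open>K' = del_edge K x y\<close> by (simp add: del_edge_def)
  ultimately show ?thesis by blast
next
  note f = fitD[OF F]
  fix x y assume xy1: "mult K x y = 1" and K': "K' = contract K x y"
  have xyv: "x \<in> verts K" "y \<in> verts K" using graph_verts[OF g, of x y] xy1 by auto
  have xy: "x \<noteq> y" using g xy1 by auto
  have cK: "card (verts K') = card (verts K) - 1" using K' xyv graph_fin[OF g] by simp
  have yx1: "mult K y x = 1" using xy1 graph_sym[OF g] by metis
  have c1: "card (verts K') \<le> p - 1 + k" using cK c by arith
  show ?thesis
  proof (cases "x \<in> q ` {..<p}")
    case True
    then obtain i where i: "i < p" "x = q i" by auto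
    show ?thesis
    proof (cases "y \<in> q ` {..<p}")
      case True
      then obtain j where j: "j < p" "y = q j" by auto
      have "fit K' (p-1) (demq q j) (dempos q pos j)"
        using fit_contract_QQ[OF g F i(1) j(1)] xy1 i j K' by simp
      then show ?thesis using c1 by blast
    next
      case False
      then have yS: "y \<in> verts K - q ` {..<p}" using xyv by simp
      have "i = pos y \<or> i = Suc (pos y)" using f(5)[OF yS i(1)] yx1 i by simp
      then have "dempos q pos i y = dempos q pos i x" using dempos_S[OF yS i(1)] i by (auto simp: dempos_def)
      then have "fit K' (p-1) (demq q i) (dempos q pos i)"
        using demote_spec[OF g F i(1), of x y] yS i xy K' by simp
      then show ?thesis using c1 by blast
    qed
  next
    case False
    then have xS: "x \<in> verts K - q ` {..<p}" using xyv by simp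
    show ?thesis
    proof (cases "y \<in> q ` {..<p}")
      case True
      then obtain j where j: "j < p" "y = q j" by auto
      have "j = pos x \<or> j = Suc (pos x)" using f(5)[OF xS j(1)] xy1 j by simp
      then have "dempos q pos j x = dempos q pos j y" using dempos_S[OF xS j(1)] j by (auto simp: dempos_def)
      then have "fit K' (p-1) (demq q j) (dempos q pos j)"
        using demote_spec[OF g F j(1), of x y] xS j xy K' by simp
      then show ?thesis using c1 by blast
    next
      case False
      then have yS: "y \<in> verts K - q ` {..<p}" using xyv by simp
      have pp: "pos x \<le> Suc (pos y) \<and> pos y \<le> Suc (pos x)" using f(6)[OF xS yS] xy1 by simp
      have bx: "pos x \<le> p - 1" "pos y \<le> p - 1" using f(7) xS yS by auto
      consider "pos x = pos y" | "pos y = Suc (pos x)" | "pos x = Suc (pos y)" using pp by linarith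
      then show ?thesis
      proof cases
        case 1
        then have "fit K' p q pos" using fit_contract_spec[OF g F xS yS xy] K' by simp
        then show ?thesis using cK c by (metis diff_le_self le_trans)
      next
        case 2
        have j: "pos y < p" using bx 2 by linarith
        have "dempos q pos (pos y) x = dempos q pos (pos y) y" using dempos_S[OF xS j] dempos_S[OF yS j] 2 by simp
        then have "fit K' (p-1) (demq q (pos y)) (dempos q pos (pos y))"
          using demote_spec[OF g F j, of x y] xS yS xy K' by simp
        then show ?thesis using c1 by blast
      next
        case 3
        have j: "pos x < p" using bx 3 by linarith
        have "dempos q pos (pos x) x = dempos q pos (pos x) y" using dempos_S[OF xS j] dempos_S[OF yS j] 3 by simp
        then have "fit K' (p-1) (demq q (pos x)) (dempos q pos (pos x))"
          using demote_spec[OF g F j, of x y] xS yS xy K' by simp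
        then show ?thesis using c1 by blast
      qed
    qed
  qed
qed

lemma fit_steps:
  assumes "minor_step\<^sup>*\<^sup>* H K" "graph H" "fit H p q pos" "card (verts H) \<le> p + k"
  shows "graph K \<and> (\<exists>p' q' pos'. fit K p' q' pos' \<and> card (verts K) \<le> p' + k)"
  using assms
proof (induction rule: rtranclp_induct)
  case base then show ?case by blast
next
  case (step y z)
  then obtain p' q' pos' where "graph y" "fit y p' q' pos'" "card (verts y) \<le> p' + k" by blast
  then show ?case using fit_step[OF _ step(2)] graph_minor_step[OF _ step(2)] by blast
qed

lemma fit_iso:
  assumes F: "fit K p q pos" and bij: "bij_betw f (verts K) (verts K')"
    and mm: "\<forall>a \<in> verts K. \<forall>b \<in> verts K. mult K' (f a) (f b) = mult K a b"
  shows "fit K' p (f \<circ> q) (pos \<circ> inv_into (verts K) f)"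
proof -
  note fd = fitD[OF F]
  let ?g = "inv_into (verts K) f"
  have gi: "?g w \<in> verts K" "f (?g w) = w" if "w \<in> verts K'" for w
    using that bij by (auto simp: bij_betw_def inv_into_into f_inv_into_f)
  have gf: "?g (f a) = a" if "a \<in> verts K" for a using bij that by (simp add: bij_betw_def)
  have injf: "inj_on f (verts K)" using bij by (simp add: bij_betw_def)
  have fv: "f a \<in> verts K'" if "a \<in> verts K" for a using bij that by (auto simp: bij_betw_def)
  have Smap: "?g w \<in> verts K - q ` {..<p}" if "w \<in> verts K' - (f \<circ> q) ` {..<p}" for w
  proof -
    have w: "w \<in> verts K'" using that by simp
    have "?g w \<notin> q ` {..<p}"
    proof
      assume "?g w \<in> q ` {..<p}"
      then obtain i where "i < p" "?g w = q i" by auto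
      then have "w = f (q i)" using gi[OF w] by metis
      then show False using that \<open>i < p\<close> by auto
    qed
    then show ?thesis using gi[OF w] by simp
  qed
  show ?thesis
  proof (rule fitI)
    show "\<And>i. i<p \<Longrightarrow> (f \<circ> q) i \<in> verts K'" using fd(1) fv by simp
    show "inj_on (f \<circ> q) {..<p}"
      using fd(1,2) injf by (intro comp_inj_on) (auto intro: inj_on_subset)
    show "\<And>i j. i<p \<Longrightarrow> j<p \<Longrightarrow> 0 < mult K' ((f \<circ> q) i) ((f \<circ> q) j) \<Longrightarrow> i = Suc j \<or> j = Suc i"
      using fd(1,3) mm by simp
    show "\<And>i j. i<p \<Longrightarrow> j<p \<Longrightarrow> mult K' ((f \<circ> q) i) ((f \<circ> q) j) \<le> 1"
      using fd(1,4) mm by simp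
    show "\<And>w j. w \<in> verts K' - (f \<circ> q) ` {..<p} \<Longrightarrow> j<p \<Longrightarrow> 0 < mult K' w ((f \<circ> q) j) \<Longrightarrow>
          j = (pos \<circ> ?g) w \<or> j = Suc ((pos \<circ> ?g) w)"
    proof -
      fix w j assume w: "w \<in> verts K' - (f \<circ> q) ` {..<p}" and j: "j < p" and m: "0 < mult K' w ((f \<circ> q) j)"
      have "mult K' w ((f \<circ> q) j) = mult K (?g w) (q j)"
        using mm Smap[OF w] fd(1)[OF j] gi[of w] w by (metis DiffD1 comp_apply)
      then show "j = (pos \<circ> ?g) w \<or> j = Suc ((pos \<circ> ?g) w)" using fd(5)[OF Smap[OF w] j] m by simp
    qed
    show "\<And>w w'. w \<in> verts K' - (f \<circ> q) ` {..<p} \<Longrightarrow> w' \<in> verts K' - (f \<circ> q) ` {..<p} \<Longrightarrow>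
          0 < mult K' w w' \<Longrightarrow> (pos \<circ> ?g) w \<le> Suc ((pos \<circ> ?g) w') \<and> (pos \<circ> ?g) w' \<le> Suc ((pos \<circ> ?g) w)"
    proof -
      fix w w' assume w: "w \<in> verts K' - (f \<circ> q) ` {..<p}" and w': "w' \<in> verts K' - (f \<circ> q) ` {..<p}"
        and m: "0 < mult K' w w'"
      have "mult K' w w' = mult K (?g w) (?g w')"
        using mm Smap[OF w] Smap[OF w'] gi[of w] gi[of w'] w w' by (metis DiffD1)
      then show "(pos \<circ> ?g) w \<le> Suc ((pos \<circ> ?g) w') \<and> (pos \<circ> ?g) w' \<le> Suc ((pos \<circ> ?g) w)"
        using fd(6)[OF Smap[OF w] Smap[OF w']] m by simp
    qed
    show "\<And>w. w \<in> verts K' - (f \<circ> q) ` {..<p} \<Longrightarrow> (pos \<circ> ?g) w \<le> p - 1"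
      using fd(7) Smap by simp
  qed
qed

lemma path_take:
  assumes "is_path G u v vs es" "0 < t" "t \<le> length vs"
  shows "is_path G u (vs ! (t-1)) (take t vs) (take (t-1) es)"
proof -
  have p: "vs \<noteq> []" "distinct vs" "set vs \<subseteq> verts G" "hd vs = u" "length es = length vs - 1"
    "\<And>i. i < length es \<Longrightarrow> es ! i < mult G (vs ! i) (vs ! Suc i)" using assms(1) unfolding is_path_def by auto
  show ?thesis unfolding is_path_def
  proof (intro conjI allI impI)
    show "take t vs \<noteq> []" using p(1) assms(2) by simp
    show "distinct (take t vs)" using p(2) by simp
    show "set (take t vs) \<subseteq> verts G" using p(3) set_take_subset by fastforce
    show "hd (take t vs) = u" using p(4) assms(2) p(1) by (simp add: hd_take)
    show "last (take t vs) = vs ! (t - 1)" using assms(2,3) p(1) by (simp add: last_conv_nth)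
    show "length (take (t - 1) es) = length (take t vs) - 1" using p(5) assms(2,3) by simp
    fix i assume i: "i < length (take (t - 1) es)"
    then have "i < length es" "Suc i < t" by auto
    then show "take (t - 1) es ! i < mult G (take t vs ! i) (take t vs ! Suc i)" using p(6) by simp
  qed
qed

lemma path_drop:
  assumes "is_path G u v vs es" "t < length vs"
  shows "is_path G (vs ! t) v (drop t vs) (drop t es)"
proof -
  have p: "vs \<noteq> []" "distinct vs" "set vs \<subseteq> verts G" "last vs = v" "length es = length vs - 1"
    "\<And>i. i < length es \<Longrightarrow> es ! i < mult G (vs ! i) (vs ! Suc i)" using assms(1) unfolding is_path_def by auto
  show ?thesis unfolding is_path_def
  proof (intro conjI allI impI)
    show "drop t vs \<noteq> []" using assms(2) by simp
    show "distinct (drop t vs)" using p(2) by simp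
    show "set (drop t vs) \<subseteq> verts G" using p(3) set_drop_subset by fastforce
    show "hd (drop t vs) = vs ! t" using assms(2) by (simp add: hd_drop_conv_nth)
    show "last (drop t vs) = v" using assms(2) p(4) by simp
    show "length (drop t es) = length (drop t vs) - 1" using p(5) by simp
    fix i assume i: "i < length (drop t es)"
    then have "t + i < length es" by auto
    then show "drop t es ! i < mult G (drop t vs ! i) (drop t vs ! Suc i)" using p(6) assms(2) p(5) by simp
  qed
qed

lemma path_edge:
  assumes "a \<noteq> b" "a \<in> verts G" "b \<in> verts G" "l < mult G a b"
  shows "is_path G a b [a, b] [l]"
  using assms unfolding is_path_def by auto

lemma path_join:
  assumes P1: "is_path G u v xs ex" and P2: "is_path G v z ys ey" and I: "set xs \<inter> set ys = {v}"
  shows "is_path G u z (xs @ tl ys) (ex @ ey)"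
proof -
  have xs: "xs \<noteq> []" "distinct xs" "set xs \<subseteq> verts G" "hd xs = u" "last xs = v" "length ex = length xs - 1"
    "\<And>i. i < length ex \<Longrightarrow> ex ! i < mult G (xs ! i) (xs ! Suc i)" using P1 unfolding is_path_def by auto
  have ys: "ys \<noteq> []" "distinct ys" "set ys \<subseteq> verts G" "hd ys = v" "last ys = z" "length ey = length ys - 1"
    "\<And>i. i < length ey \<Longrightarrow> ey ! i < mult G (ys ! i) (ys ! Suc i)" using P2 unfolding is_path_def by auto
  obtain y0 yt where yd: "ys = y0 # yt" using ys(1) by (cases ys) auto
  have y0: "y0 = v" using yd ys(4) by simp
  have lx: "xs ! (length xs - 1) = v" using xs(1,5) by (simp add: last_conv_nth)
  have dis: "distinct (xs @ yt)" using xs(2) ys(2) I yd y0 by auto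
  have nth1: "(xs @ yt) ! i = ys ! (i - (length xs - 1))" if "length xs - 1 \<le> i" "i < length xs + length yt" for i
  proof (cases "i < length xs")
    case True
    then have "i = length xs - 1" using that by simp
    then show ?thesis using lx yd y0 True by (simp add: nth_append)
  next
    case False
    have e: "i - (length xs - 1) = Suc (i - length xs)" using False xs(1) by (cases xs) auto
    show ?thesis unfolding e using False yd by (simp add: nth_append)
  qed
  show ?thesis unfolding is_path_def yd list.sel
  proof (intro conjI allI impI)
    show "xs @ yt \<noteq> []" using xs(1) by simp
    show "distinct (xs @ yt)" by (fact dis)
    show "set (xs @ yt) \<subseteq> verts G" using xs(3) ys(3) yd by auto
    show "hd (xs @ yt) = u" using xs(1,4) by simp
    show "last (xs @ yt) = z" using xs(5) ys(5) yd y0 by (cases "yt = []") auto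
    show "length (ex @ ey) = length (xs @ yt) - 1" using xs(6) ys(6) xs(1) yd by (cases xs) auto
    fix i assume i: "i < length (ex @ ey)"
    show "(ex @ ey) ! i < mult G ((xs @ yt) ! i) ((xs @ yt) ! Suc i)"
    proof (cases "i < length ex")
      case True
      then have "Suc i < length xs" using xs(6) by simp
      then show ?thesis using xs(6,7) True by (simp add: nth_append)
    next
      case False
      let ?r = "i - length ex"
      have r: "?r < length ey" using i False by simp
      have lt: "Suc i < length xs + length yt" using i xs(6) ys(6) yd xs(1) by (cases xs) auto
      have "(xs @ yt) ! i = ys ! ?r" using nth1[of i] False xs(6) i ys(6) yd by simp
      moreover have "(xs @ yt) ! Suc i = ys ! Suc ?r" using nth1[of "Suc i"] lt False xs(6) 
        by (simp add: Suc_diff_le)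
      moreover have "(ex @ ey) ! i = ey ! ?r" using False by (simp add: nth_append)
      ultimately show ?thesis using ys(7)[OF r] by simp
    qed
  qed
qed

lemma fit_usp:
  assumes g: "graph H" and U: "unique_shortest_path H vs es"
  shows "\<exists>pos. fit H (length vs) (\<lambda>i. vs ! i) pos"
proof -
  define p where "p = length vs"
  define q where "q = (\<lambda>i. vs ! i)"
  define u where "u = hd vs"
  define z where "z = last vs"
  have P: "is_path H u z vs es" using U unfolding unique_shortest_path_def shortest_path_def u_def z_def by blast
  have SH: "\<And>a b. is_path H u z a b \<Longrightarrow> p \<le> length a"
    using U unfolding unique_shortest_path_def shortest_path_def u_def z_def p_def by blast
  have UN: "\<And>a b. is_path H u z a b \<Longrightarrow> length a = p \<Longrightarrow> a = vs \<and> b = es"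
    using U unfolding unique_shortest_path_def u_def z_def p_def by blast
  have vs: "vs \<noteq> []" "distinct vs" "set vs \<subseteq> verts H" "length es = p - 1"
    "\<And>i. i < length es \<Longrightarrow> es ! i < mult H (vs ! i) (vs ! Suc i)"
    using P unfolding is_path_def p_def by auto
  have p0: "0 < p" using vs(1) p_def by simp
  have u0: "u = q 0" using vs(1) unfolding u_def q_def by (simp add: hd_conv_nth)
  define Rs where "Rs w = {l. \<exists>a b. is_path H u w a b \<and> length a = Suc l}" for w
  define D where "D w = (LEAST l. l \<in> Rs w)" for w
  have D_le: "Rs w \<noteq> {} \<and> D w \<le> length a - 1" if "is_path H u w a b" for w a b
  proof -
    have "a \<noteq> []" using that unfolding is_path_def by simp
    then have "length a - 1 \<in> Rs w" using that unfolding Rs_def by auto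
    then show ?thesis unfolding D_def by (auto intro: Least_le)
  qed
  have D_ex: "\<exists>a b. is_path H u w a b \<and> length a = Suc (D w)" if ne: "Rs w \<noteq> {}" for w
  proof -
    obtain l where "l \<in> Rs w" using ne by auto
    then have "D w \<in> Rs w" unfolding D_def by (rule LeastI)
    then show ?thesis unfolding Rs_def by auto
  qed
  have D_pre: "D (a ! t) \<le> t" if "is_path H u w a b" "t < length a" for w a b t
    using D_le[OF path_take[OF that(1), of "Suc t"]] that(2) by simp
  have D_lip: "Rs w' \<noteq> {} \<and> D w' \<le> Suc (D w)" if Rw: "Rs w \<noteq> {}" and mw: "0 < mult H w w'" for w w'
  proof -
    obtain a b where ab: "is_path H u w a b" "length a = Suc (D w)" using D_ex[OF Rw] by blast
    show ?thesis
    proof (cases "w' \<in> set a")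
      case True
      then obtain t where t: "t < length a" "w' = a ! t" by (auto simp: in_set_conv_nth)
      have "Rs w' \<noteq> {} \<and> D w' \<le> t" using D_le[OF path_take[OF ab(1), of "Suc t"]] t by simp
      then show ?thesis using t ab(2) by simp
    next
      case False
      have ww: "w \<noteq> w'" using that(2) g by auto
      have wv: "w \<in> verts H" "w' \<in> verts H" using graph_verts[OF g that(2)] by auto
      have E: "is_path H w w' [w, w'] [0]" using path_edge[OF ww wv that(2)] .
      have lw: "last a = w" using ab(1) unfolding is_path_def by simp
      have "w \<in> set a" using ab(1) lw unfolding is_path_def by auto
      then have I: "set a \<inter> set [w, w'] = {w}" using False by auto
      have "is_path H u w' (a @ [w']) (b @ [0])" using path_join[OF ab(1) E I] by simp
      from D_le[OF this] show ?thesis using ab(2) by simp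
    qed
  qed
  have qv: "q i \<in> verts H" if "i < p" for i using vs(3) that unfolding q_def p_def by auto
  have qinj: "i < p \<Longrightarrow> j < p \<Longrightarrow> q i = q j \<Longrightarrow> i = j" for i j
    using vs(2) unfolding q_def p_def by (simp add: nth_eq_iff_index_eq)
  have qset: "q ` {..<p} = set vs" unfolding q_def p_def by (auto simp: in_set_conv_nth)
  have zq: "z = q (p - 1)" using vs(1) unfolding z_def q_def p_def by (simp add: last_conv_nth)
  have Pq: "is_path H (q j) z (drop j vs) (drop j es)" if "j < p" for j
    using path_drop[OF P, of j] that unfolding q_def p_def by simp
  have qdrop: "q j \<in> set (drop j vs)" if "j < p" for j
  proof -
    have "drop j vs ! 0 \<in> set (drop j vs)" using that unfolding p_def by (intro nth_mem) simp
    then show ?thesis using that unfolding q_def p_def by simp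
  qed
  have D_q: "Rs (q j) \<noteq> {} \<and> D (q j) = j" if j: "j < p" for j
  proof -
    have T: "is_path H u (q j) (take (Suc j) vs) (take j es)" using path_take[OF P, of "Suc j"] j unfolding q_def p_def by simp
    from D_le[OF T] have R: "Rs (q j) \<noteq> {}" "D (q j) \<le> j" using j p_def by auto
    have "\<not> D (q j) < j"
    proof
      assume lt: "D (q j) < j"
      obtain a b where ab: "is_path H u (q j) a b" "length a = Suc (D (q j))" using D_ex[OF R(1)] by blast
      have a: "a \<noteq> []" "last a = q j" "distinct a" using ab(1) unfolding is_path_def by auto
      define A where "A = {s. s < length a \<and> a ! s \<in> set (drop j vs)}"
      have "q j \<in> set (drop j vs)" using qdrop[OF j] .
      then have "length a - 1 \<in> A" using a unfolding A_def by (simp add: last_conv_nth)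
      define s0 where "s0 = (LEAST s. s \<in> A)"
      have s0A: "s0 \<in> A" unfolding s0_def by (rule LeastI) fact
      have s0min: "\<And>s. s \<in> A \<Longrightarrow> s0 \<le> s" unfolding s0_def by (rule Least_le)
      have s0l: "s0 < length a" "a ! s0 \<in> set (drop j vs)" using s0A unfolding A_def by auto
      then obtain l' where l': "l' < length (drop j vs)" "a ! s0 = drop j vs ! l'" by (auto simp: in_set_conv_nth)
      define l where "l = j + l'"
      have l: "j \<le> l" "l < p" "a ! s0 = q l" using l' j unfolding l_def q_def p_def by auto
      have X: "is_path H u (q l) (take (Suc s0) a) (take s0 b)" using path_take[OF ab(1), of "Suc s0"] s0l l by simp
      have Y: "is_path H (q l) z (drop l vs) (drop l es)" by (rule Pq[OF l(2)])
      have I: "set (take (Suc s0) a) \<inter> set (drop l vs) = {q l}"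
      proof
        show "{q l} \<subseteq> set (take (Suc s0) a) \<inter> set (drop l vs)"
        proof -
          have "take (Suc s0) a ! s0 \<in> set (take (Suc s0) a)" using s0l by (intro nth_mem) simp
          then have "q l \<in> set (take (Suc s0) a)" using l s0l by simp
          then show ?thesis using qdrop[OF l(2)] by simp
        qed
        show "set (take (Suc s0) a) \<inter> set (drop l vs) \<subseteq> {q l}"
        proof
          fix x assume x: "x \<in> set (take (Suc s0) a) \<inter> set (drop l vs)"
          have x1: "x \<in> set (take (Suc s0) a)" and x2: "x \<in> set (drop l vs)" using x by auto
          from x1 obtain s' where s': "s' < length (take (Suc s0) a)" "x = take (Suc s0) a ! s'" by (metis in_set_conv_nth)
          have "set (drop l vs) \<subseteq> set (drop j vs)" by (rule set_drop_subset_set_drop[OF l(1)])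
          then have "x \<in> set (drop j vs)" using x2 by (rule subsetD)
          moreover have "s' < length a" "x = a ! s'" using s' by auto
          ultimately have "s' \<in> A" unfolding A_def by simp
          then have "s0 \<le> s'" by (rule s0min)
          then have "s' = s0" using s' by simp
          then show "x \<in> {q l}" using s' l by simp
        qed
      qed
      have J: "is_path H u z (take (Suc s0) a @ tl (drop l vs)) (take s0 b @ drop l es)" by (rule path_join[OF X Y I])
      have "length (take (Suc s0) a @ tl (drop l vs)) < p" using s0l l lt ab(2) j unfolding p_def by simp
      with SH[OF J] show False by simp
    qed
    then show ?thesis using R by simp
  qed
  have D_nz: "D w \<noteq> 0" if Rw: "Rs w \<noteq> {}" and wn: "w \<notin> set vs" for w
  proof
    assume "D w = 0"
    then obtain a b where ab: "is_path H u w a b" "length a = 1" using D_ex[OF Rw] by auto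
    then have "hd a = u" "last a = w" unfolding is_path_def by auto
    then have "w = u" using ab(2) by (cases a) auto
    then show False using wn vs(1) unfolding u_def by simp
  qed
  have spec: "Rs w \<noteq> {} \<and> (D w = j \<or> D w = Suc j)"
    if w: "w \<in> verts H" "w \<notin> set vs" and j: "j < p" and m: "0 < mult H w (q j)" for w j
  proof -
    have m': "0 < mult H (q j) w" using m graph_sym[OF g] by metis
    have R: "Rs w \<noteq> {}" "D w \<le> Suc j" using D_lip[OF _ m'] D_q[OF j] by auto
    have j1: "j \<le> Suc (D w)" using D_lip[OF R(1) m] D_q[OF j] by auto
    have "Suc (D w) \<noteq> j"
    proof
      assume e: "Suc (D w) = j"
      obtain a b where ab: "is_path H u w a b" "length a = j" using D_ex[OF R(1)] e by auto
      have a: "last a = w" "a \<noteq> []" using ab(1) unfolding is_path_def by auto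
      have Da: "D x < j" if xa: "x \<in> set a" for x
      proof -
        obtain t where "t < length a" "x = a ! t" using xa by (auto simp: in_set_conv_nth)
        then show ?thesis using D_pre[OF ab(1)] ab(2) by fastforce
      qed
      have qnot: "q j \<notin> set a" using Da D_q[OF j] by fastforce
      have wq: "w \<noteq> q j" using w(2) j unfolding q_def p_def by auto
      have E: "is_path H w (q j) [w, q j] [0]" using path_edge[OF wq w(1) qv[OF j] m] .
      have I1: "set a \<inter> set [w, q j] = {w}" using qnot a by (auto simp: last_in_set)
      have X: "is_path H u (q j) (a @ [q j]) (b @ [0])" using path_join[OF ab(1) E I1] by simp
      have I2: "set (a @ [q j]) \<inter> set (drop j vs) = {q j}"
      proof
        show "{q j} \<subseteq> set (a @ [q j]) \<inter> set (drop j vs)"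
          using qdrop[OF j] by simp
        show "set (a @ [q j]) \<inter> set (drop j vs) \<subseteq> {q j}"
        proof
          fix x assume x: "x \<in> set (a @ [q j]) \<inter> set (drop j vs)"
          then obtain l' where l': "l' < length (drop j vs)" "x = drop j vs ! l'" by (auto simp: in_set_conv_nth)
          have "x = q (j + l')" "j + l' < p" using l' j unfolding q_def p_def by auto
          then have "D x \<ge> j" using D_q by simp
          then have "x \<notin> set a" using Da by fastforce
          then show "x \<in> {q j}" using x by auto
        qed
      qed
      have J: "is_path H u z (a @ [q j] @ tl (drop j vs)) (b @ [0] @ drop j es)"
        using path_join[OF X Pq[OF j] I2] by simp
      have "length (a @ [q j] @ tl (drop j vs)) = p" using ab(2) j unfolding p_def by simp
      then have "a @ [q j] @ tl (drop j vs) = vs" using UN[OF J] by blast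
      moreover have "w \<in> set (a @ [q j] @ tl (drop j vs))" using a by (auto simp: last_in_set)
      ultimately show False using w(2) by simp
    qed
    then show ?thesis using R j1 by auto
  qed
  have M: "mult H (q i) (q (Suc i)) \<le> 1" if i: "Suc i < p" for i
  proof (rule ccontr)
    assume "\<not> mult H (q i) (q (Suc i)) \<le> 1"
    then have m2: "2 \<le> mult H (q i) (q (Suc i))" by simp
    define es' where "es' = es[i := (if es ! i = 0 then 1 else 0)]"
    have "is_path H u z vs es'"
      unfolding is_path_def
    proof (intro conjI allI impI)
      show "vs \<noteq> []" "distinct vs" "set vs \<subseteq> verts H" "hd vs = u" "last vs = z"
        using P unfolding is_path_def by auto
      show "length es' = length vs - 1" using vs(4) unfolding es'_def p_def by simp
      fix i' assume i': "i' < length es'"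
      show "es' ! i' < mult H (vs ! i') (vs ! Suc i')"
      proof (cases "i' = i")
        case True
        have "es' ! i' \<le> 1" using True i vs(4) unfolding es'_def by simp
        then show ?thesis using m2 True unfolding q_def by simp
      next
        case False
        then show ?thesis using vs(5) i' unfolding es'_def by simp
      qed
    qed
    then have "es' = es" using UN p_def by blast
    then have "es ! i = (if es ! i = 0 then 1 else 0)" unfolding es'_def using i vs(4)
      by (metis diff_Suc_1 less_diff_conv nth_list_update_eq Suc_eq_plus1)
    then show False by (simp split: if_splits)
  qed
  define pos where "pos w = (if Rs w \<noteq> {} then min (D w - 1) (p - 1) else 0)" for w
  have "fit H p q pos"
  proof (rule fitI)
    show "\<And>i. i < p \<Longrightarrow> q i \<in> verts H" by (rule qv)
    show "inj_on q {..<p}" using qinj by (auto simp: inj_on_def)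
    show adjQ: "\<And>i j. i<p \<Longrightarrow> j<p \<Longrightarrow> 0 < mult H (q i) (q j) \<Longrightarrow> i = Suc j \<or> j = Suc i"
    proof -
      fix i j assume ij: "i < p" "j < p" and m: "0 < mult H (q i) (q j)"
      have m': "0 < mult H (q j) (q i)" using m graph_sym[OF g] by metis
      have "j \<le> Suc i" using D_lip[OF _ m] D_q[OF ij(1)] D_q[OF ij(2)] by auto
      moreover have "i \<le> Suc j" using D_lip[OF _ m'] D_q[OF ij(1)] D_q[OF ij(2)] by auto
      moreover have "i \<noteq> j" using m g by auto
      ultimately show "i = Suc j \<or> j = Suc i" by arith
    qed
    show "\<And>i j. i<p \<Longrightarrow> j<p \<Longrightarrow> mult H (q i) (q j) \<le> 1"
    proof -
      fix i j assume ij: "i < p" "j < p"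
      show "mult H (q i) (q j) \<le> 1"
      proof (cases "mult H (q i) (q j) = 0")
        case False
        then have "i = Suc j \<or> j = Suc i" using adjQ[OF ij] by simp
        then show ?thesis using M ij graph_sym[OF g] by metis
      qed simp
    qed
    show "\<And>w j. w \<in> verts H - q ` {..<p} \<Longrightarrow> j<p \<Longrightarrow> 0 < mult H w (q j) \<Longrightarrow> j = pos w \<or> j = Suc (pos w)"
    proof -
      fix w j assume w: "w \<in> verts H - q ` {..<p}" and j: "j < p" and m: "0 < mult H w (q j)"
      have w': "w \<in> verts H" "w \<notin> set vs" using w qset by auto
      from spec[OF w' j m] have s: "Rs w \<noteq> {}" "D w = j \<or> D w = Suc j" by auto
      have "D w \<noteq> 0" using D_nz[OF s(1) w'(2)] .
      then show "j = pos w \<or> j = Suc (pos w)" using s j unfolding pos_def by auto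
    qed
    show "\<And>w w'. w \<in> verts H - q ` {..<p} \<Longrightarrow> w' \<in> verts H - q ` {..<p} \<Longrightarrow>
         0 < mult H w w' \<Longrightarrow> pos w \<le> Suc (pos w') \<and> pos w' \<le> Suc (pos w)"
    proof -
      fix w w' assume m: "0 < mult H w w'"
      have m': "0 < mult H w' w" using m graph_sym[OF g] by metis
      show "pos w \<le> Suc (pos w') \<and> pos w' \<le> Suc (pos w)"
      proof (cases "Rs w \<noteq> {}")
        case True
        then have "Rs w' \<noteq> {}" "D w' \<le> Suc (D w)" using D_lip[OF True m] by auto
        moreover have "D w \<le> Suc (D w')" using D_lip[OF \<open>Rs w' \<noteq> {}\<close> m'] by auto
        ultimately show ?thesis using True unfolding pos_def by auto
      next
        case False
        then have "Rs w' = {}" using D_lip[OF _ m'] by auto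
        then show ?thesis using False unfolding pos_def by auto
      qed
    qed
    show "\<And>w. w \<in> verts H - q ` {..<p} \<Longrightarrow> pos w \<le> p - 1" unfolding pos_def by auto
  qed
  then show ?thesis unfolding p_def q_def by blast
qed

lemma path_len_card:
  assumes "graph K" "is_path K u v vs es" shows "length vs \<le> card (verts K)"
proof -
  have "distinct vs" "set vs \<subseteq> verts K" using assms(2) unfolding is_path_def by auto
  then show ?thesis using graph_fin[OF assms(1)] by (metis card_mono distinct_card)
qed

lemma usp_fin:
  assumes "graph K"
  shows "finite {length vs | vs es. unique_shortest_path K vs es}"
proof (rule finite_subset)
  show "{length vs | vs es. unique_shortest_path K vs es} \<subseteq> {..card (verts K)}"
    using path_len_card[OF assms] unfolding unique_shortest_path_def shortest_path_def by auto
qed simp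

lemma usp_single:
  assumes "v \<in> verts K" shows "unique_shortest_path K [v] []"
  unfolding unique_shortest_path_def shortest_path_def
proof (intro conjI allI impI)
  show "is_path K (hd [v]) (last [v]) [v] []" using assms unfolding is_path_def by auto
  fix vs' :: "nat list" and es' :: "nat list"
  show "is_path K (hd [v]) (last [v]) vs' es' \<Longrightarrow> length [v] \<le> length vs'"
    unfolding is_path_def by (cases vs') auto
  assume a: "is_path K (hd [v]) (last [v]) vs' es' \<and> length vs' = length [v]"
  then obtain x where "vs' = [x]" by (cases vs') auto
  then show "vs' = [v]" "es' = []" using a unfolding is_path_def by auto
qed

lemma usp_ge:
  assumes "graph K" "unique_shortest_path K vs es" shows "length vs \<le> usp K"
  unfolding usp_def using usp_fin[OF assms(1)] assms(2) by (auto intro: Max_ge)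

lemma usp_attained:
  assumes "graph K" shows "\<exists>vs es. unique_shortest_path K vs es \<and> length vs = usp K"
proof -
  obtain v where "v \<in> verts K" using assms unfolding graph_def by auto
  then have ne: "{length vs | vs es. unique_shortest_path K vs es} \<noteq> {}" using usp_single by blast
  have "usp K \<in> {length vs | vs es. unique_shortest_path K vs es}"
    unfolding usp_def by (rule Max_in[OF usp_fin[OF assms] ne])
  then show ?thesis by auto
qed

lemma usp_le_card:
  assumes "graph K" shows "usp K \<le> card (verts K)"
  using usp_attained[OF assms] path_len_card[OF assms]
  unfolding unique_shortest_path_def shortest_path_def by metis

lemma usp_pos:
  assumes "graph K" shows "1 \<le> usp K"
proof -
  obtain v where "v \<in> verts K" using assms unfolding graph_def by auto
  from usp_ge[OF assms usp_single[OF this]] show ?thesis by simp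
qed

lemma iso_refl: "iso K K"
  unfolding iso_def by (rule exI[of _ id]) auto

lemma is_minor_refl: "is_minor K K"
  unfolding is_minor_def using iso_refl by blast

lemma spf_le: "graph H \<Longrightarrow> is_minor G H \<Longrightarrow> sp_floor G \<le> sp H"
  unfolding sp_floor_def by (rule cInf_lower) auto

lemma spf_attained:
  assumes "graph G" shows "\<exists>H. graph H \<and> is_minor G H \<and> sp H = sp_floor G"
proof -
  have "{sp H | H. graph H \<and> is_minor G H} \<noteq> {}" using assms is_minor_refl by blast
  from Inf_nat_def1[OF this] show ?thesis unfolding sp_floor_def by auto
qed

lemma spf_ge:
  assumes "graph G" "\<And>H. graph H \<Longrightarrow> is_minor G H \<Longrightarrow> k \<le> sp H"
  shows "k \<le> sp_floor G"
  unfolding sp_floor_def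
  by (rule cInf_greatest) (use assms is_minor_refl in auto)

lemma graph_steps: "minor_step\<^sup>*\<^sup>* H K \<Longrightarrow> graph H \<Longrightarrow> graph K"
  by (induction rule: rtranclp_induct) (auto intro: graph_minor_step)

definition gsum :: "nat set \<Rightarrow> mgraph \<Rightarrow> nat" where
  "gsum V K = (\<Sum>ab \<in> V \<times> V. mult K (fst ab) (snd ab))"

lemma sub_steps:
  assumes "graph A" "graph B" "verts A = verts B" "\<And>a b. mult A a b \<le> mult B a b"
  shows "minor_step\<^sup>*\<^sup>* B A"
  using assms
proof (induction "gsum (verts B) B" arbitrary: B rule: less_induct)
  case less
  note gA = less.prems(1) and gB = less.prems(2) and V = less.prems(3) and le = less.prems(4)
  show ?case
  proof (cases "\<forall>a b. mult A a b = mult B a b")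
    case True
    then have "mult A = mult B" by auto
    then have "A = B" using V by (cases A, cases B) auto
    then show ?thesis by simp
  next
    case False
    then obtain a b where ab: "mult A a b < mult B a b" using le by (meson le_neq_implies_less)
    have pos: "0 < mult B a b" using ab by simp
    have abv: "a \<in> verts B" "b \<in> verts B" using graph_verts[OF gB pos] by auto
    have ne: "a \<noteq> b" using pos gB by auto
    define B' where "B' = del_edge B a b"
    have st: "minor_step B B'" unfolding minor_step_def B'_def using pos by blast
    have gB': "graph B'" using graph_minor_step[OF gB st] .
    have VB': "verts B' = verts B" unfolding B'_def del_edge_def by simp
    have mB': "mult B' x y = (if (x = a \<and> y = b) \<or> (x = b \<and> y = a) then mult B x y - 1 else mult B x y)" for x y
      unfolding B'_def del_edge_def by simp
    have ba: "mult A b a < mult B b a" using ab graph_sym[OF gA] graph_sym[OF gB] by metis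
    have le': "mult A x y \<le> mult B' x y" for x y
      using le[of x y] ab ba unfolding mB' by auto
    have lt: "gsum (verts B') B' < gsum (verts B) B"
      unfolding gsum_def VB'
    proof (rule sum_strict_mono_ex1)
      show "finite (verts B \<times> verts B)" using graph_fin[OF gB] by simp
      show "\<forall>x\<in>verts B \<times> verts B. mult B' (fst x) (snd x) \<le> mult B (fst x) (snd x)" unfolding mB' by auto
      show "\<exists>x\<in>verts B \<times> verts B. mult B' (fst x) (snd x) < mult B (fst x) (snd x)"
        using abv pos unfolding mB' by (intro bexI[of _ "(a,b)"]) auto
    qed
    have "minor_step\<^sup>*\<^sup>* B' A" using less.hyps[OF lt gA gB' _ le'] V VB' by simp
    then show ?thesis using st by (meson converse_rtranclp_into_rtranclp)
  qed
qed

lemma minor_mono_sub: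
  assumes gG: "graph G" and gG': "graph G'" and V: "verts G = verts G'" and le: "\<And>a b. mult G a b \<le> mult G' a b"
    and gH: "graph H'" and M: "is_minor G' H'"
  shows "is_minor G H'"
proof -
  obtain G3 where s3: "minor_step\<^sup>*\<^sup>* H' G3" and i3: "iso G3 G'" using M unfolding is_minor_def by blast
  obtain f where f: "bij_betw f (verts G3) (verts G')" "\<forall>a \<in> verts G3. \<forall>b \<in> verts G3. mult G' (f a) (f b) = mult G3 a b"
    using i3 unfolding iso_def by blast
  have g3: "graph G3" using graph_steps[OF s3 gH] .
  define G4 where "G4 = \<lparr>verts = verts G3, mult = (\<lambda>a b. if a \<in> verts G3 \<and> b \<in> verts G3 then mult G (f a) (f b) else 0)\<rparr>"
  have g4a: "finite (verts G4)" "verts G4 \<noteq> {}" using g3 unfolding G4_def graph_def by auto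
  have g4b: "\<forall>a b. mult G4 a b = mult G4 b a" unfolding G4_def using graph_sym[OF gG] by auto
  have g4c: "\<forall>a. mult G4 a a = 0" unfolding G4_def using gG by auto
  have g4d: "\<forall>a b. 0 < mult G4 a b \<longrightarrow> a \<in> verts G4 \<and> b \<in> verts G4" unfolding G4_def by (auto split: if_splits)
  have g4: "graph G4" unfolding graph_def using g4a g4b g4c g4d by blast
  have le4: "mult G4 a b \<le> mult G3 a b" for a b
  proof (cases "a \<in> verts G3 \<and> b \<in> verts G3")
    case True
    then show ?thesis unfolding G4_def using le[of "f a" "f b"] f(2) by simp
  qed (auto simp: G4_def)
  have s4: "minor_step\<^sup>*\<^sup>* G3 G4" by (rule sub_steps[OF g4 g3]) (use le4 in \<open>auto simp: G4_def\<close>)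
  have "iso G4 G" unfolding iso_def G4_def using f(1) V by (intro exI[of _ f]) auto
  then show ?thesis unfolding is_minor_def using s3 s4 by (meson rtranclp_trans)
qed

lemma iso_same:
  assumes gG: "graph G" and gG': "graph G'" and V: "verts G = verts G'" and le: "\<And>a b. mult G a b \<le> mult G' a b"
    and I: "iso G' G"
  shows "G' = G"
proof -
  obtain f where f: "bij_betw f (verts G') (verts G)" "\<forall>a \<in> verts G'. \<forall>b \<in> verts G'. mult G (f a) (f b) = mult G' a b"
    using I unfolding iso_def by blast
  let ?V = "verts G"
  have fin: "finite (?V \<times> ?V)" using graph_fin[OF gG] by simp
  have bm: "bij_betw (map_prod f f) (?V \<times> ?V) (?V \<times> ?V)"
    using f(1) V by (intro bij_betw_map_prod) auto
  have mp: "map_prod f f = (\<lambda>ab. (f (fst ab), f (snd ab)))" by (auto simp: map_prod_def)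
  have bij2: "bij_betw (\<lambda>ab. (f (fst ab), f (snd ab))) (?V \<times> ?V) (?V \<times> ?V)"
    using bm unfolding mp .
  have "(\<Sum>ab \<in> ?V \<times> ?V. mult G' (fst ab) (snd ab)) = (\<Sum>ab \<in> ?V \<times> ?V. mult G (f (fst ab)) (f (snd ab)))"
    using f(2) V by (intro sum.cong) auto
  also have "\<dots> = (\<Sum>ab \<in> ?V \<times> ?V. mult G (fst ab) (snd ab))"
    using sum.reindex_bij_betw[OF bij2, of "\<lambda>ab. mult G (fst ab) (snd ab)"] by simp
  finally have eq: "(\<Sum>ab \<in> ?V \<times> ?V. mult G' (fst ab) (snd ab)) = (\<Sum>ab \<in> ?V \<times> ?V. mult G (fst ab) (snd ab))" .
  have "\<forall>ab \<in> ?V \<times> ?V. mult G (fst ab) (snd ab) = mult G' (fst ab) (snd ab)"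
  proof (rule ccontr)
    assume "\<not> ?thesis"
    then obtain ab where ab: "ab \<in> ?V \<times> ?V" "mult G (fst ab) (snd ab) < mult G' (fst ab) (snd ab)"
      using le by (meson le_neq_implies_less)
    have "(\<Sum>ab \<in> ?V \<times> ?V. mult G (fst ab) (snd ab)) < (\<Sum>ab \<in> ?V \<times> ?V. mult G' (fst ab) (snd ab))"
      apply (rule sum_strict_mono_ex1[OF fin])
      using le apply blast
      using ab by blast
    then show False using eq by simp
  qed
  then have "mult G a b = mult G' a b" for a b
    using graph_out[OF gG, of a b] graph_out[OF gG', of a b] V by (cases "a \<in> ?V \<and> b \<in> ?V") auto
  then have "mult G = mult G'" by auto
  then show ?thesis using V by (cases G, cases G') auto
qed

definition crowd :: "nat set \<Rightarrow> nat \<Rightarrow> (nat \<Rightarrow> nat) \<Rightarrow> (nat \<Rightarrow> nat) \<Rightarrow> nat \<Rightarrow> mgraph" where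
  "crowd V p q cp m = \<lparr>verts = V, mult = (\<lambda>a b. if a \<in> V \<and> b \<in> V \<and> a \<noteq> b then
     (if a \<in> q ` {..<p} \<and> b \<in> q ` {..<p} then
        (if \<exists>t. Suc t < p \<and> ((a = q t \<and> b = q (Suc t)) \<or> (b = q t \<and> a = q (Suc t))) then 1 else 0)
      else if a \<in> q ` {..<p} then (if a = q (cp b) \<or> a = q (Suc (cp b)) then m else 0)
      else if b \<in> q ` {..<p} then (if b = q (cp a) \<or> b = q (Suc (cp a)) then m else 0)
      else (if cp a \<le> Suc (cp b) \<and> cp b \<le> Suc (cp a) then m else 0))
    else 0)\<rparr>"

locale CR =
  fixes V :: "nat set" and p :: nat and q :: "nat \<Rightarrow> nat" and cp :: "nat \<Rightarrow> nat" and m :: nat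
  assumes finV: "finite V" and p2: "2 \<le> p" and qinj: "inj_on q {..<p}" and qV: "q ` {..<p} \<subseteq> V"
    and cpb: "\<And>w. cp w \<le> p - 2" and m1: "1 \<le> m"
begin

abbreviation "Gc \<equiv> crowd V p q cp m"
abbreviation "QS \<equiv> q ` {..<p}"

lemma qeq: "i < p \<Longrightarrow> j < p \<Longrightarrow> q i = q j \<longleftrightarrow> i = j"
  using qinj by (auto simp: inj_on_def)

lemma cplt: "Suc (cp w) < p"
  using cpb[of w] p2 by linarith

lemma verts_Gc[simp]: "verts Gc = V" by (simp add: crowd_def)

lemma M_QQ: assumes "i < p" "j < p"
  shows "mult Gc (q i) (q j) = (if i = Suc j \<or> j = Suc i then 1 else 0)"
proof (cases "i = j")
  case True then show ?thesis by (simp add: crowd_def)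
next
  case False
  then have ne: "q i \<noteq> q j" using qeq assms by simp
  have inV: "q i \<in> V" "q j \<in> V" using qV assms by auto
  have "(\<exists>t. Suc t < p \<and> ((q i = q t \<and> q j = q (Suc t)) \<or> (q j = q t \<and> q i = q (Suc t)))) \<longleftrightarrow> (i = Suc j \<or> j = Suc i)"
  proof
    assume "\<exists>t. Suc t < p \<and> ((q i = q t \<and> q j = q (Suc t)) \<or> (q j = q t \<and> q i = q (Suc t)))"
    then obtain t where t: "Suc t < p" "(q i = q t \<and> q j = q (Suc t)) \<or> (q j = q t \<and> q i = q (Suc t))" by blast
    have tp: "t < p" using t(1) by simp
    from t(2) show "i = Suc j \<or> j = Suc i"
    proof
      assume "q i = q t \<and> q j = q (Suc t)"
      then have "i = t" "j = Suc t" using qeq[OF assms(1) tp] qeq[OF assms(2) t(1)] by auto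
      then show ?thesis by simp
    next
      assume "q j = q t \<and> q i = q (Suc t)"
      then have "j = t" "i = Suc t" using qeq[OF assms(2) tp] qeq[OF assms(1) t(1)] by auto
      then show ?thesis by simp
    qed
  next
    assume "i = Suc j \<or> j = Suc i"
    then show "\<exists>t. Suc t < p \<and> ((q i = q t \<and> q j = q (Suc t)) \<or> (q j = q t \<and> q i = q (Suc t)))" using assms by auto
  qed
  then show ?thesis using ne inV assms by (simp add: crowd_def)
qed

lemma M_QS: assumes "i < p" "w \<in> V - QS"
  shows "mult Gc (q i) w = (if i = cp w \<or> i = Suc (cp w) then m else 0)"
proof -
  have ne: "q i \<noteq> w" using assms by auto
  have inV: "q i \<in> V" using qV assms by auto
  have "(q i = q (cp w) \<or> q i = q (Suc (cp w))) \<longleftrightarrow> (i = cp w \<or> i = Suc (cp w))"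
    using qeq[OF assms(1), of "cp w"] qeq[OF assms(1), of "Suc (cp w)"] cplt[of w] by simp
  then show ?thesis using assms ne inV by (simp add: crowd_def)
qed

lemma M_SQ: assumes "i < p" "w \<in> V - QS"
  shows "mult Gc w (q i) = (if i = cp w \<or> i = Suc (cp w) then m else 0)"
proof -
  have ne: "q i \<noteq> w" using assms by auto
  have inV: "q i \<in> V" using qV assms by auto
  have "(q i = q (cp w) \<or> q i = q (Suc (cp w))) \<longleftrightarrow> (i = cp w \<or> i = Suc (cp w))"
    using qeq[OF assms(1), of "cp w"] qeq[OF assms(1), of "Suc (cp w)"] cplt[of w] by simp
  then show ?thesis using assms ne inV by (auto simp add: crowd_def)
qed

lemma M_SS: assumes "w \<in> V - QS" "w' \<in> V - QS" "w \<noteq> w'"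
  shows "mult Gc w w' = (if cp w \<le> Suc (cp w') \<and> cp w' \<le> Suc (cp w) then m else 0)"
proof -
  have c1: "w \<in> V \<and> w' \<in> V \<and> w \<noteq> w'" and c2: "\<not> (w \<in> q ` {..<p} \<and> w' \<in> q ` {..<p})"
    and c3: "w \<notin> q ` {..<p}" and c4: "w' \<notin> q ` {..<p}" using assms by auto
  show ?thesis unfolding crowd_def mgraph.select_convs
    by (simp only: if_P[OF c1] if_not_P[OF c2] if_not_P[OF c3] if_not_P[OF c4])
qed

lemma M_out0: "\<not> (a \<in> V \<and> b \<in> V \<and> a \<noteq> b) \<Longrightarrow> mult Gc a b = 0"
  unfolding crowd_def mgraph.select_convs by (simp only: if_not_P if_False)

lemma M_out: "a \<notin> V \<or> b \<notin> V \<or> a = b \<Longrightarrow> mult Gc a b = 0"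
  by (rule M_out0) blast

lemma Gc_cases:
  assumes "a \<in> V" "b \<in> V"
  obtains (QQ) i j where "i < p" "j < p" "a = q i" "b = q j"
  | (QS) i where "i < p" "a = q i" "b \<in> V - QS"
  | (SQ) j where "j < p" "a \<in> V - QS" "b = q j"
  | (SS) "a \<in> V - QS" "b \<in> V - QS"
  using assms by blast

lemma graph_Gc: "graph Gc"
proof -
  obtain i0 where "i0 < p" using p2 by (intro that[of 0]) simp
  then have ne: "V \<noteq> {}" using qV by auto
  have sym: "mult Gc a b = mult Gc b a" for a b
  proof (cases "a \<in> V \<and> b \<in> V \<and> a \<noteq> b")
    case True
    then have "a \<in> V" "b \<in> V" "a \<noteq> b" by auto
    then show ?thesis
    proof (cases rule: Gc_cases)
      case (QQ i j) then show ?thesis using M_QQ by auto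
    next
      case (QS i) then show ?thesis using M_QS M_SQ by simp
    next
      case (SQ j) then show ?thesis using M_QS M_SQ by simp
    next
      case SS then show ?thesis using M_SS \<open>a \<noteq> b\<close> by auto
    qed
  next
    case False then show ?thesis using M_out by auto
  qed
  have d: "\<forall>a. mult Gc a a = 0" using M_out by simp
  have o: "\<forall>a b. 0 < mult Gc a b \<longrightarrow> a \<in> verts Gc \<and> b \<in> verts Gc"
    using M_out by (metis less_irrefl verts_Gc)
  show ?thesis unfolding graph_def using finV ne sym d o by (simp only: verts_Gc) blast
qed

lemma Gc_pos_V: "0 < mult Gc a b \<Longrightarrow> a \<in> V \<and> b \<in> V \<and> a \<noteq> b"
  using M_out[of a b] by auto

definition idx :: "nat \<Rightarrow> nat" where "idx v = (THE i. i < p \<and> q i = v)"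

lemma idx_q[simp]: "i < p \<Longrightarrow> idx (q i) = i"
  unfolding idx_def using qeq by (intro the_equality) auto

definition phi :: "nat \<Rightarrow> nat" where
  "phi v = (if v \<in> QS then 2 * idx v else Suc (2 * cp v))"

lemma phi_q[simp]: "i < p \<Longrightarrow> phi (q i) = 2 * i"
  unfolding phi_def by auto

lemma phi_S: "w \<notin> QS \<Longrightarrow> phi w = Suc (2 * cp w)"
  unfolding phi_def by auto

lemma edge_phi:
  assumes "0 < mult Gc a b"
  shows "phi b \<le> phi a + 2 \<and> (\<forall>i<p. a = q i \<and> phi a + 2 \<le> phi b \<longrightarrow> Suc i < p \<and> b = q (Suc i))"
proof -
  have ab: "a \<in> V" "b \<in> V" "a \<noteq> b" using Gc_pos_V[OF assms] by auto
  from ab(1,2) show ?thesis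
  proof (cases rule: Gc_cases)
    case (QQ i j)
    then have "i = Suc j \<or> j = Suc i" using assms M_QQ by (auto split: if_splits)
    then show ?thesis using QQ qeq by auto
  next
    case (QS i)
    then have "i = cp b \<or> i = Suc (cp b)" using assms M_QS by (auto split: if_splits)
    then show ?thesis using QS phi_S[of b] qeq by auto
  next
    case (SQ j)
    then have "j = cp a \<or> j = Suc (cp a)" using assms M_SQ by (auto split: if_splits)
    then show ?thesis using SQ phi_S[of a] by auto
  next
    case SS
    then have "cp a \<le> Suc (cp b) \<and> cp b \<le> Suc (cp a)" using assms M_SS ab(3) by (auto split: if_splits)
    then show ?thesis using SS phi_S[of a] phi_S[of b] by auto
  qed
qed

lemma path_phi:
  assumes P: "is_path Gc u v xs ys" and rs: "r \<le> s" "s < length xs"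
  shows "phi (xs ! s) \<le> phi (xs ! r) + 2 * (s - r)"
  using rs
proof (induction s)
  case 0 then show ?case by simp
next
  case (Suc s)
  show ?case
  proof (cases "r = Suc s")
    case True then show ?thesis by simp
  next
    case False
    then have rs': "r \<le> s" "s < length xs" using Suc.prems by auto
    have "ys ! s < mult Gc (xs ! s) (xs ! Suc s)" using P Suc.prems(2) unfolding is_path_def by auto
    then have "phi (xs ! Suc s) \<le> phi (xs ! s) + 2" using edge_phi by (metis gr_implies_not0 neq0_conv)
    then show ?thesis using Suc.IH[OF rs'] rs' by simp
  qed
qed

definition vsQ :: "nat list" where "vsQ = map q [0..<p]"
definition esQ :: "nat list" where "esQ = replicate (p - 1) 0"

lemma vsQ_len[simp]: "length vsQ = p" unfolding vsQ_def by simp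
lemma vsQ_nth[simp]: "i < p \<Longrightarrow> vsQ ! i = q i" unfolding vsQ_def by simp
lemma vsQ_set: "set vsQ = QS" unfolding vsQ_def by auto
lemma vsQ_hd: "hd vsQ = q 0" using p2 unfolding vsQ_def by (simp add: hd_map upt_conv_Cons)
lemma vsQ_last: "last vsQ = q (p - 1)" using p2 unfolding vsQ_def by (simp add: last_map)

lemma path_Q: "is_path Gc (q 0) (q (p - 1)) vsQ esQ"
  unfolding is_path_def
proof (intro conjI allI impI)
  show "vsQ \<noteq> []" using p2 unfolding vsQ_def by simp
  show "distinct vsQ" unfolding vsQ_def using qinj by (simp add: distinct_map inj_on_subset atLeast_upt)
  show "set vsQ \<subseteq> verts Gc" using qV vsQ_set by simp
  show "hd vsQ = q 0" by (rule vsQ_hd)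
  show "last vsQ = q (p - 1)" by (rule vsQ_last)
  show "length esQ = length vsQ - 1" unfolding esQ_def by simp
  fix i assume i: "i < length esQ"
  then have "Suc i < p" unfolding esQ_def by simp
  then show "esQ ! i < mult Gc (vsQ ! i) (vsQ ! Suc i)" using M_QQ i unfolding esQ_def by simp
qed

lemma usp_Q: "unique_shortest_path Gc vsQ esQ"
  unfolding unique_shortest_path_def shortest_path_def vsQ_hd vsQ_last
proof (intro conjI allI impI)
  show "is_path Gc (q 0) (q (p - 1)) vsQ esQ" by (rule path_Q)
  have lenb: "p \<le> length xs" if P: "is_path Gc (q 0) (q (p - 1)) xs ys" for xs ys
  proof -
    have xs: "xs \<noteq> []" "hd xs = q 0" "last xs = q (p - 1)" using P unfolding is_path_def by auto
    have x0: "xs ! 0 = q 0" using xs by (simp add: hd_conv_nth)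
    have xl: "xs ! (length xs - 1) = q (p - 1)" using xs by (simp add: last_conv_nth)
    have "phi (xs ! (length xs - 1)) \<le> phi (xs ! 0) + 2 * (length xs - 1 - 0)"
      using path_phi[OF P, of 0 "length xs - 1"] xs by simp
    then have "2 * (p - 1) \<le> 2 * (length xs - 1)" using x0 xl p2 by simp
    then show ?thesis using p2 xs by (cases xs) auto
  qed
  show "\<And>vs' es'. is_path Gc (q 0) (q (p - 1)) vs' es' \<Longrightarrow> length vsQ \<le> length vs'"
    using lenb by simp
  fix xs ys assume A: "is_path Gc (q 0) (q (p - 1)) xs ys \<and> length xs = length vsQ"
  then have P: "is_path Gc (q 0) (q (p - 1)) xs ys" and L: "length xs = p" by auto
  have xs: "xs \<noteq> []" "hd xs = q 0" "last xs = q (p - 1)" "length ys = length xs - 1"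
    "\<And>i. i < length ys \<Longrightarrow> ys ! i < mult Gc (xs ! i) (xs ! Suc i)" using P unfolding is_path_def by auto
  have x0: "xs ! 0 = q 0" using xs by (simp add: hd_conv_nth)
  have xl: "xs ! (p - 1) = q (p - 1)" using xs L by (simp add: last_conv_nth)
  have allq: "\<forall>t. t < p \<longrightarrow> xs ! t = q t"
  proof (intro allI impI)
    fix t assume "t < p"
    then show "xs ! t = q t"
    proof (induction t)
      case 0 then show ?case using x0 by simp
    next
      case (Suc t)
      have IH: "xs ! t = q t" using Suc by simp
      have m: "0 < mult Gc (q t) (xs ! Suc t)" using xs(5)[of t] Suc.prems L xs(4) IH by fastforce
      show ?case
      proof (rule ccontr)
        assume ne: "xs ! Suc t \<noteq> q (Suc t)"
        have "\<not> phi (q t) + 2 \<le> phi (xs ! Suc t)" using edge_phi[OF m] ne Suc.prems by auto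
        then have a: "phi (xs ! Suc t) \<le> 2 * t + 1" using Suc.prems by simp
        have "phi (xs ! (p - 1)) \<le> phi (xs ! Suc t) + 2 * (p - 1 - Suc t)"
          using path_phi[OF P, of "Suc t" "p - 1"] Suc.prems L by simp
        then show False using a xl p2 Suc.prems by simp
      qed
    qed
  qed
  show "xs = vsQ" using allq L by (intro nth_equalityI) auto
  show "ys = esQ"
  proof (rule nth_equalityI)
    show "length ys = length esQ" using xs(4) L unfolding esQ_def by simp
    fix i assume i: "i < length ys"
    then have "Suc i < p" using xs(4) L by simp
    then have "ys ! i < 1" using xs(5)[OF i] allq M_QQ by simp
    then show "ys ! i = esQ ! i" using i xs(4) L unfolding esQ_def by simp
  qed
qed

lemma usp_Gc_ge: "p \<le> usp Gc"
  using usp_ge[OF graph_Gc usp_Q] by simp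

lemma crowded_Q:
  assumes "usp Gc = p"
  shows "crowded_parade Gc p vsQ esQ"
  unfolding crowded_parade_def parade_def
proof (intro conjI ballI impI)
  show "2 \<le> p" by (rule p2)
  show "unique_shortest_path Gc vsQ esQ" by (rule usp_Q)
  show "length vsQ = usp Gc" "length vsQ = p" using assms by auto
  fix w assume w: "w \<in> verts Gc - set vsQ"
  then have wS: "w \<in> V - QS" using vsQ_set by simp
  have c: "cp w < p" "Suc (cp w) < p" using cplt[of w] by auto
  have "{x \<in> set vsQ. adj Gc w x} = {q (cp w), q (Suc (cp w))}"
  proof
    show "{x \<in> set vsQ. adj Gc w x} \<subseteq> {q (cp w), q (Suc (cp w))}"
    proof
      fix x assume "x \<in> {x \<in> set vsQ. adj Gc w x}"
      then obtain i where i: "i < p" "x = q i" "0 < mult Gc w (q i)" using vsQ_set unfolding adj_def by auto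
      then have "i = cp w \<or> i = Suc (cp w)" using M_SQ[OF i(1) wS] by (auto split: if_splits)
      then show "x \<in> {q (cp w), q (Suc (cp w))}" using i by auto
    qed
    show "{q (cp w), q (Suc (cp w))} \<subseteq> {x \<in> set vsQ. adj Gc w x}"
      using M_SQ[OF c(1) wS] M_SQ[OF c(2) wS] m1 c vsQ_set unfolding adj_def by auto
  qed
  moreover have "q (cp w) \<noteq> q (Suc (cp w))" using qeq c by simp
  moreover have "adj Gc (q (cp w)) (q (Suc (cp w)))" using M_QQ c unfolding adj_def by simp
  ultimately show "\<exists>a b. a \<noteq> b \<and> {x \<in> set vsQ. adj Gc w x} = {a, b} \<and> adj Gc a b" by blast
next
  fix w1 w2 assume w1: "w1 \<in> verts Gc - set vsQ" and w2: "w2 \<in> verts Gc - set vsQ"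
    and h: "w1 \<noteq> w2 \<and> (\<exists>x\<in>set vsQ. adj Gc w1 x \<and> adj Gc w2 x)"
  have wS: "w1 \<in> V - QS" "w2 \<in> V - QS" using w1 w2 vsQ_set by auto
  obtain i where i: "i < p" "adj Gc w1 (q i)" "adj Gc w2 (q i)" using h vsQ_set by auto
  have "i = cp w1 \<or> i = Suc (cp w1)" "i = cp w2 \<or> i = Suc (cp w2)"
    using i M_SQ[OF i(1) wS(1)] M_SQ[OF i(1) wS(2)] unfolding adj_def by (auto split: if_splits)
  then have "cp w1 \<le> Suc (cp w2) \<and> cp w2 \<le> Suc (cp w1)" by auto
  then show "adj Gc w1 w2" using M_SS[OF wS] h m1 unfolding adj_def by simp
qed

lemma sat_Q:
  assumes "i < mult Gc a b" "\<not> parade_edge vsQ esQ a b i"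
  shows "mult Gc a b = m"
proof -
  have pos: "0 < mult Gc a b" using assms(1) by simp
  have ab: "a \<in> V" "b \<in> V" "a \<noteq> b" using Gc_pos_V[OF pos] by auto
  from ab(1,2) show ?thesis
  proof (cases rule: Gc_cases)
    case (QQ s t)
    then have adj: "s = Suc t \<or> t = Suc s" and m1': "mult Gc a b = 1" using pos M_QQ by (auto split: if_splits)
    then have i0: "i = 0" using assms(1) by simp
    have "parade_edge vsQ esQ a b i"
      unfolding parade_edge_def
    proof (cases "t = Suc s")
      case True
      then show "\<exists>j<length esQ. esQ ! j = i \<and> (vsQ ! j = a \<and> vsQ ! Suc j = b \<or> vsQ ! j = b \<and> vsQ ! Suc j = a)"
        using QQ i0 by (intro exI[of _ s]) (auto simp: esQ_def)
    next
      case False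
      then have "s = Suc t" using adj by simp
      then show "\<exists>j<length esQ. esQ ! j = i \<and> (vsQ ! j = a \<and> vsQ ! Suc j = b \<or> vsQ ! j = b \<and> vsQ ! Suc j = a)"
        using QQ i0 by (intro exI[of _ t]) (auto simp: esQ_def)
    qed
    then show ?thesis using assms(2) by simp
  next
    case (QS s) then show ?thesis using pos M_QS by (auto split: if_splits)
  next
    case (SQ t) then show ?thesis using pos M_SQ by (auto split: if_splits)
  next
    case SS then show ?thesis using pos M_SS ab(3) by (auto split: if_splits)
  qed
qed

end

context CR begin

lemma Gc_le_m: "mult Gc a b \<le> m"
proof (cases "a \<in> V \<and> b \<in> V")
  case True
  then have "a \<in> V" "b \<in> V" by auto
  then show ?thesis
  proof (cases rule: Gc_cases)
    case (QQ i j) then show ?thesis using M_QQ m1 by auto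
  next
    case (QS i) then show ?thesis using M_QS by auto
  next
    case (SQ j) then show ?thesis using M_SQ by auto
  next
    case SS then show ?thesis using M_SS M_out by (cases "a = b") auto
  qed
next
  case False then show ?thesis using M_out by auto
qed

lemma fit_le_Gc:
  assumes gG: "graph G" and VG: "verts G = V" and F: "fit G p q pos"
    and cpd: "\<And>w. cp w = min (pos w) (p - 2)" and mG: "\<And>a b. mult G a b \<le> m"
  shows "mult G a b \<le> mult Gc a b"
proof (cases "a \<in> V \<and> b \<in> V \<and> a \<noteq> b")
  case False
  then have "mult G a b = 0" using graph_out[OF gG, of a b] gG VG by auto
  then show ?thesis by simp
next
  case True
  note f = fitD[OF F]
  have cpos: "j = cp w \<or> j = Suc (cp w)" if "j < p" "j = pos w \<or> j = Suc (pos w)" "pos w \<le> p - 1" for j w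
    using that p2 unfolding cpd by auto
  show ?thesis
  proof (cases "mult G a b = 0")
    case True then show ?thesis by simp
  next
    case nz: False
    then have pos0: "0 < mult G a b" by simp
    from True have "a \<in> V" "b \<in> V" by auto
    then show ?thesis
    proof (cases rule: Gc_cases)
      case (QQ i j)
      then have "i = Suc j \<or> j = Suc i" using f(3) pos0 by auto
      then show ?thesis using M_QQ QQ f(4)[of i j] by auto
    next
      case (QS i)
      have bS: "b \<in> verts G - q ` {..<p}" using QS VG by simp
      have "0 < mult G b (q i)" using pos0 QS graph_sym[OF gG] by metis
      then have "i = cp b \<or> i = Suc (cp b)" using cpos[OF QS(1) f(5)[OF bS QS(1)] f(7)[OF bS]] by simp
      then show ?thesis using M_QS[OF QS(1,3)] QS mG[of a b] by auto
    next
      case (SQ j)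
      have aS: "a \<in> verts G - q ` {..<p}" using SQ VG by simp
      have "0 < mult G a (q j)" using pos0 SQ by simp
      then have "j = cp a \<or> j = Suc (cp a)" using cpos[OF SQ(1) f(5)[OF aS SQ(1)] f(7)[OF aS]] by simp
      then show ?thesis using M_SQ[OF SQ(1,2)] SQ mG[of a b] by auto
    next
      case SS
      have S: "a \<in> verts G - q ` {..<p}" "b \<in> verts G - q ` {..<p}" using SS VG by auto
      have "pos a \<le> Suc (pos b) \<and> pos b \<le> Suc (pos a)" using f(6)[OF S pos0] .
      then have "cp a \<le> Suc (cp b) \<and> cp b \<le> Suc (cp a)" unfolding cpd by auto
      then show ?thesis using M_SS[OF SS] True mG[of a b] by auto
    qed
  qed
qed

end

theorem theorem7p6:
  fixes n m k :: nat and G :: mgraph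
  assumes "(k + 2 \<le> n \<and> 1 \<le> m) \<or> (k + 1 = n \<and> 2 \<le> m)"
    and "minor_maximal (graph_class n m k) G"
  shows "saturated_crowded_parade m (n - k) G"
proof -
  have cls: "graph_class n m k G" and maxi: "\<And>H. graph_class n m k H \<Longrightarrow> is_minor G H \<Longrightarrow> iso H G"
    using assms(2) unfolding minor_maximal_def by auto
  have gG: "graph G" and cG: "card (verts G) = n" and mG: "\<And>a b. mult G a b \<le> m" and sG: "sp_floor G = k"
    using cls unfolding graph_class_def by auto
  have key: "G' = G \<and> k \<le> sp G'"
    if g': "graph G'" and V': "verts G' = verts G" and le': "\<And>a b. mult G a b \<le> mult G' a b"
      and m': "\<And>a b. mult G' a b \<le> m" and s': "sp G' \<le> k" for G'
  proof -
    have "k \<le> sp_floor G'"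
    proof (rule spf_ge[OF g'])
      fix H assume "graph H" "is_minor G' H"
      then have "is_minor G H" using minor_mono_sub[OF gG g' V'[symmetric] le'] by blast
      then show "k \<le> sp H" using spf_le[OF \<open>graph H\<close>] sG by metis
    qed
    moreover have "sp_floor G' \<le> sp G'" using spf_le[OF g' is_minor_refl] .
    ultimately have sf: "sp_floor G' = k" "k \<le> sp G'" using s' by auto
    have "graph_class n m k G'" unfolding graph_class_def using g' V' cG m' sf by auto
    moreover have "is_minor G G'" unfolding is_minor_def
      using sub_steps[OF gG g' V'[symmetric] le'] iso_refl by blast
    ultimately have "iso G' G" by (rule maxi)
    then have "G' = G" by (rule iso_same[OF gG g' V'[symmetric] le'])
    then show ?thesis using sf by simp
  qed
  from assms(1) show ?thesis
  proof
    assume B: "k + 1 = n \<and> 2 \<le> m"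
    let ?V = "verts G"
    define G' where "G' = \<lparr>verts = ?V, mult = (\<lambda>a b. if a \<in> ?V \<and> b \<in> ?V \<and> a \<noteq> b then m else 0)\<rparr>"
    have g': "graph G'" using gG unfolding graph_def G'_def by auto
    have le': "mult G a b \<le> mult G' a b" for a b
      using mG[of a b] graph_out[OF gG, of a b] gG unfolding G'_def by (cases "a = b") auto
    have "1 \<le> usp G'" by (rule usp_pos[OF g'])
    moreover have "verts G' = verts G" by (simp add: G'_def)
    ultimately have "sp G' \<le> k" unfolding sp_def using B cG by arith
    then have "G' = G" using key[OF g' _ le'] by (auto simp: G'_def)
    then have "mult G a b = mult G' a b" for a b by simp
    then have "mult G a b = (if a \<in> ?V \<and> b \<in> ?V \<and> a \<noteq> b then m else 0)" for a b by (simp add: G'_def)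
    then show ?thesis using B unfolding saturated_crowded_parade_def by auto
  next
    assume A: "k + 2 \<le> n \<and> 1 \<le> m"
    obtain H where H: "graph H" "is_minor G H" "sp H = k" using spf_attained[OF gG] sG by auto
    obtain vs es where U: "unique_shortest_path H vs es" "length vs = usp H" using usp_attained[OF H(1)] by blast
    have cH: "card (verts H) \<le> length vs + k" using H(3) U(2) usp_le_card[OF H(1)] unfolding sp_def by simp
    obtain pos0 where F0: "fit H (length vs) (\<lambda>i. vs ! i) pos0" using fit_usp[OF H(1) U(1)] by blast
    obtain G3 where s3: "minor_step\<^sup>*\<^sup>* H G3" and i3: "iso G3 G" using H(2) unfolding is_minor_def by blast
    obtain p q pos where g3: "graph G3" and F3: "fit G3 p q pos" and c3: "card (verts G3) \<le> p + k"
      using fit_steps[OF s3 H(1) F0 cH] by blast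
    obtain f where f: "bij_betw f (verts G3) (verts G)" "\<forall>a \<in> verts G3. \<forall>b \<in> verts G3. mult G (f a) (f b) = mult G3 a b"
      using i3 unfolding iso_def by blast
    define Q where "Q = f \<circ> q"
    define P where "P = pos \<circ> inv_into (verts G3) f"
    have F: "fit G p Q P" unfolding Q_def P_def by (rule fit_iso[OF F3 f(1) f(2)])
    have cc: "card (verts G3) = n" using bij_betw_same_card[OF f(1)] cG by simp
    have np: "n \<le> p + k" using c3 cc by simp
    note fd = fitD[OF F]
    have pn: "p \<le> n"
    proof -
      have "card (Q ` {..<p}) = p" using card_image[OF fd(2)] by simp
      moreover have "card (Q ` {..<p}) \<le> card (verts G)" using fd(1) graph_fin[OF gG] by (intro card_mono) auto
      ultimately show ?thesis using cG by simp
    qed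
    have p2: "2 \<le> p" using A np by simp
    define cp where "cp w = min (P w) (p - 2)" for w
    interpret CR "verts G" p Q cp m
      by unfold_locales (use graph_fin[OF gG] p2 fd(1,2) A in \<open>auto simp: cp_def\<close>)
    have le': "mult G a b \<le> mult Gc a b" for a b
      by (rule fit_le_Gc[OF gG refl F]) (auto simp: cp_def mG)
    have "p \<le> usp Gc" by (rule usp_Gc_ge)
    then have "sp Gc \<le> k" unfolding sp_def using np cG by simp
    then have eq: "Gc = G" and ks: "k \<le> sp Gc" using key[OF graph_Gc _ le' Gc_le_m] by auto
    have "usp Gc = p" using ks \<open>p \<le> usp Gc\<close> np usp_le_card[OF graph_Gc] cG unfolding sp_def by simp
    moreover have pe: "p = n - k" using ks \<open>p \<le> usp Gc\<close> np usp_le_card[OF graph_Gc] cG unfolding sp_def by simp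
    ultimately have "crowded_parade Gc (n - k) vsQ esQ" using crowded_Q by simp
    moreover have "\<forall>a b i. i < mult Gc a b \<and> \<not> parade_edge vsQ esQ a b i \<longrightarrow> mult Gc a b = m"
      using sat_Q by blast
    moreover have "n - k \<noteq> 1" using A by arith
    ultimately have "saturated_crowded_parade m (n - k) Gc"
      unfolding saturated_crowded_parade_def by (simp only: if_False if_not_P) blast
    then show ?thesis using eq by (rule subst[where P = "saturated_crowded_parade m (n - k)", rotated])
  qed
qed

end
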